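(* Let $n \in \mathbb{N}$, let $A = \begin{pmatrix} B & C \\ C^T & D\end{pmatrix} \in \mathcal{M}_{2n}(\mathbb{R})$ be symmetric positive definite with $B,C,D \in \mathcal{M}_n(\mathbb{R})$, and let $M := \tfrac{1}{2}(B + D - i(C - C^T))$ and $N := \tfrac{1}{2}(B - D + i(C + C^T))$. Then the matrix $\begin{pmatrix} M & N \\ \overline{N} & \overline{M}\end{pmatrix} \in \mathcal{M}_{2n}(\mathbb{C})$ is Hermitian and has the same eigenvalues (with multiplicities) as $A$. Moreover $M$ and $M - N\overline{M}^{-1}\overline{N}$ are Hermitian positive definite and, for $k = 1,\dots,n$, $$\lambda_k(A) \le \lambda_k(M) \le \lambda_{k+n}(A), \qquad \lambda_k(A) \le \lambda_k\big(M - N\overline{M}^{-1}\overline{N}\big) \le \lambda_{k+n}(A).$$ In particular, the condition numbers (ratio of largest to smallest eigenvalue) of $M$ and of $M - N\overline{M}^{-1}\overline{N}$ are at most that of $A$.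
   Context: For a Hermitian matrix $H$ of size $m$, $\lambda_1(H) \le \dots \le \lambda_m(H)$ denote its eigenvalues in increasing order (with multiplicity). Bars denote entrywise complex conjugation; $(\cdot)^T$ is transpose. *)

theory Defs
  imports "Jordan_Normal_Form.Char_Poly" "Jordan_Normal_Form.Gauss_Jordan_Elimination"
begin

definition cconj_mat :: "complex mat \<Rightarrow> complex mat" where
  "cconj_mat H = map_mat cnj H"

definition hermitian_mat :: "complex mat \<Rightarrow> bool" where
  "hermitian_mat H \<longleftrightarrow> dim_row H = dim_col H \<and>
     (\<forall>i<dim_row H. \<forall>j<dim_row H. H $$ (i,j) = cnj (H $$ (j,i)))"

definition pos_def_cmat :: "complex mat \<Rightarrow> bool" where
  "pos_def_cmat H \<longleftrightarrow> hermitian_mat H \<and>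
     (\<forall>v \<in> carrier_vec (dim_row H). v \<noteq> 0\<^sub>v (dim_row H) \<longrightarrow>
        Re (\<Sum>i<dim_row H. \<Sum>j<dim_row H. cnj (v $ i) * H $$ (i,j) * v $ j) > 0)"

definition pos_def_rmat :: "real mat \<Rightarrow> bool" where
  "pos_def_rmat A \<longleftrightarrow> dim_row A = dim_col A \<and> transpose_mat A = A \<and>
     (\<forall>x \<in> carrier_vec (dim_row A). x \<noteq> 0\<^sub>v (dim_row A) \<longrightarrow> x \<bullet> (A *\<^sub>v x) > 0)"

definition eig_mset :: "complex mat \<Rightarrow> complex multiset" where
  "eig_mset H = proots (char_poly H)"

(* eigenvalues of a Hermitian matrix (all real) in increasing order, with multiplicity *)
definition eig_list :: "complex mat \<Rightarrow> real list" where
  "eig_list H = sorted_list_of_multiset (image_mset Re (eig_mset H))"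

(* lambda_k(H), 1-based indexing *)
definition lam :: "complex mat \<Rightarrow> nat \<Rightarrow> real" where
  "lam H k = eig_list H ! (k - 1)"

definition cond_num :: "complex mat \<Rightarrow> real" where
  "cond_num H = lam H (dim_row H) / lam H 1"

definition cmat :: "real mat \<Rightarrow> complex mat" where
  "cmat A = map_mat complex_of_real A"

end

theory Submission
  imports Defs "Jordan_Normal_Form.Schur_Decomposition"
begin

definition adj :: "complex mat \<Rightarrow> complex mat" where
  "adj X = mat (dim_col X) (dim_row X) (\<lambda>(i,j). cnj (X $$ (j,i)))"

lemma adj_dims[simp]: "dim_row (adj X) = dim_col X" "dim_col (adj X) = dim_row X"
  by (auto simp: adj_def)
lemma adj_index[simp]: "i < dim_col X \<Longrightarrow> j < dim_row X \<Longrightarrow> adj X $$ (i,j) = cnj (X $$ (j,i))"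
  by (auto simp: adj_def)
lemma adj_carrier[simp]: "X \<in> carrier_mat a b \<Longrightarrow> adj X \<in> carrier_mat b a"
  by (auto simp: adj_def)
lemma adj_adj[simp]: "adj (adj X) = X"
  by (rule eq_matI, auto)
lemma adj_one[simp]: "adj (1\<^sub>m n) = 1\<^sub>m n"
  by (rule eq_matI, auto)
lemma adj_zero[simp]: "adj (0\<^sub>m a b) = 0\<^sub>m b a"
  by (rule eq_matI, auto)

lemma adj_mult: assumes "X \<in> carrier_mat a b" "Y \<in> carrier_mat b c"
  shows "adj (X * Y) = adj Y * adj X"
  using assms by (intro eq_matI) (auto simp: scalar_prod_def cnj_sum mult.commute intro!: sum.cong)

lemma sprod_mat_sum: assumes "X \<in> carrier_mat nr nc" "x \<in> carrier_vec nr" "y \<in> carrier_vec nc"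
  shows "conjugate x \<bullet> (X *\<^sub>v y) = (\<Sum>i<nr. \<Sum>j<nc. cnj (x$i) * X$$(i,j) * y$j)"
  using assms by (auto simp: scalar_prod_def sum_distrib_left atLeast0LessThan mult.assoc intro!: sum.cong)

lemma sprod_adj: assumes "X \<in> carrier_mat nr nc" "x \<in> carrier_vec nr" "y \<in> carrier_vec nc"
  shows "conjugate x \<bullet> (X *\<^sub>v y) = conjugate (adj X *\<^sub>v x) \<bullet> y"
proof -
  have "conjugate (adj X *\<^sub>v x) \<bullet> y = (\<Sum>j<nc. \<Sum>i<nr. cnj (x$i) * X$$(i,j) * y$j)"
    using assms by (auto simp: scalar_prod_def sum_distrib_right sum_distrib_left atLeast0LessThan mult.commute mult.left_commute intro!: sum.cong)
  then show ?thesis unfolding sprod_mat_sum[OF assms] by (simp add: sum.swap[of _ "{..<nc}"])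
qed

definition qf :: "complex mat \<Rightarrow> complex vec \<Rightarrow> complex" where
  "qf H v = (\<Sum>i<dim_row H. \<Sum>j<dim_row H. cnj (v $ i) * H $$ (i,j) * v $ j)"

lemma qf_sprod: assumes "H \<in> carrier_mat n n" "v \<in> carrier_vec n"
  shows "qf H v = conjugate v \<bullet> (H *\<^sub>v v)"
  using sprod_mat_sum[OF assms(1) assms(2) assms(2)] assms by (simp add: qf_def)

lemma hermitianD: "hermitian_mat H \<Longrightarrow> i < dim_row H \<Longrightarrow> j < dim_row H \<Longrightarrow> H $$ (i,j) = cnj (H $$ (j,i))"
  unfolding hermitian_mat_def by blast

lemma hermitianD2: "hermitian_mat H \<Longrightarrow> dim_col H = dim_row H"
  unfolding hermitian_mat_def by simp

lemma hermitian_adjD: assumes "hermitian_mat H" "H \<in> carrier_mat n n" shows "adj H = H"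
proof (rule eq_matI)
  fix i j assume "i < dim_row H" "j < dim_col H"
  moreover have "H $$ (j,i) = cnj (H $$ (i,j))" using hermitianD[OF assms(1), of j i] calculation assms(2) by simp
  ultimately show "adj H $$ (i,j) = H $$ (i,j)" using assms(2) by simp
next
  show "dim_row (adj H) = dim_row H" "dim_col (adj H) = dim_col H" using assms by auto
qed

lemma hermitian_adjI: assumes "H \<in> carrier_mat n n" "adj H = H" shows "hermitian_mat H"
  unfolding hermitian_mat_def
proof (intro conjI allI impI)
  fix i j assume "i < dim_row H" "j < dim_row H"
  then have "adj H $$ (i,j) = cnj (H $$ (j,i))" using assms(1) by auto
  then show "H $$ (i,j) = cnj (H $$ (j,i))" by (simp only: assms(2))
qed (use assms(1) in auto)

lemma unitary_completion:
  fixes v :: "complex vec"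
  assumes v: "v \<in> carrier_vec m" and v1: "v \<bullet>c v = 1"
  shows "\<exists>W \<in> carrier_mat m m. adj W * W = 1\<^sub>m m \<and> col W 0 = v"
proof -
  interpret cof_vec_space m "TYPE(complex)" .
  have v0: "v \<noteq> 0\<^sub>v m" using v1 by auto
  define b where "b = basis_completion v"
  from basis_completion[OF v v0, folded b_def]
  have dist_b: "distinct b" and indep: "\<not> lin_dep (set b)" and b: "set b \<subseteq> carrier_vec m"
    and hdb: "hd b = v" and len_b: "length b = m" by auto
  have m: "m \<noteq> 0" using v0 by (auto intro!: eq_vecI simp: carrier_vecD[OF v])
  from hdb len_b m obtain vs where bv: "b = v # vs" by (cases b, auto)
  define ws where "ws = gram_schmidt m b"
  from gram_schmidt_result[OF b dist_b indep refl, folded ws_def]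
  have ws: "set ws \<subseteq> carrier_vec m" "corthogonal ws" "length ws = m"
    by (auto simp: len_b)
  from gram_schmidt_hd[OF v, of vs, folded bv] have hdws: "hd ws = v" unfolding ws_def .
  define nz where "nz = (\<lambda>w::complex vec. complex_of_real (1 / sqrt (Re (w \<bullet>c w))) \<cdot>\<^sub>v w)"
  define us where "us = map nz ws"
  have ws0: "ws ! 0 = v" using hdws ws(3) m by (cases ws, auto)
  have pos: "i < m \<Longrightarrow> Re (ws!i \<bullet>c ws!i) > 0 \<and> Im (ws!i \<bullet>c ws!i) = 0" for i
  proof -
    assume i: "i < m"
    then have wc: "ws!i \<in> carrier_vec m" using ws by auto
    have "ws!i \<bullet>c ws!i \<noteq> 0" using corthogonalD[OF ws(2)] i ws(3) by auto
    moreover have "ws!i \<bullet>c ws!i \<ge> 0" by auto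
    ultimately have "ws!i \<bullet>c ws!i > 0" by auto
    then show ?thesis by (auto simp: less_complex_def)
  qed
  have usc: "i < m \<Longrightarrow> us!i \<in> carrier_vec m" for i using ws by (auto simp: us_def nz_def)
  have usp: "i < m \<Longrightarrow> j < m \<Longrightarrow> us!i \<bullet>c us!j = (if i = j then 1 else 0)" for i j
  proof -
    assume i: "i < m" and j: "j < m"
    have wi: "ws!i \<in> carrier_vec m" "ws!j \<in> carrier_vec m" using ws i j by auto
    have e: "us!i \<bullet>c us!j = complex_of_real (1 / sqrt (Re (ws!i \<bullet>c ws!i))) * complex_of_real (1 / sqrt (Re (ws!j \<bullet>c ws!j))) * (ws!i \<bullet>c ws!j)"
      using i j ws wi by (simp add: us_def nz_def conjugate_smult_vec scalar_prod_smult_left scalar_prod_smult_right)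
    show ?thesis
    proof (cases "i = j")
      case True
      define r where "r = Re (ws!i \<bullet>c ws!i)"
      have r: "ws!i \<bullet>c ws!i = complex_of_real r" "r > 0" using pos[OF i]
        by (auto simp: complex_eq_iff r_def)
      have "complex_of_real (1 / sqrt r) * complex_of_real (1 / sqrt r) * complex_of_real r = complex_of_real ((1 / sqrt r) * (1 / sqrt r) * r)" by (simp only: of_real_mult)
      also have "(1 / sqrt r) * (1 / sqrt r) * r = 1" using r(2) by (simp add: field_simps)
      finally show ?thesis using e True r by simp
    next
      case False
      then have "ws!i \<bullet>c ws!j = 0" using corthogonalD[OF ws(2)] i j ws(3) by auto
      then show ?thesis using e False by simp
    qed
  qed
  define W where "W = mat_of_cols m us"
  have W: "W \<in> carrier_mat m m" using ws by (auto simp: W_def us_def)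
  have "adj W * W = 1\<^sub>m m"
  proof (rule eq_matI)
    fix i j assume "i < dim_row (1\<^sub>m m)" "j < dim_col (1\<^sub>m m)"
    then have i: "i < m" and j: "j < m" by auto
    have "(adj W * W) $$ (i,j) = (\<Sum>k<m. cnj (W $$ (k,i)) * W $$ (k,j))"
      using W i j by (auto simp: scalar_prod_def atLeast0LessThan intro!: sum.cong)
    also have "\<dots> = us!j \<bullet>c us!i"
      using W i j usc[OF i] usc[OF j] by (auto simp: W_def mat_of_cols_index scalar_prod_def atLeast0LessThan mult.commute us_def intro!: sum.cong)
    also have "\<dots> = 1\<^sub>m m $$ (i,j)" using usp[OF j i] i j by auto
    finally show "(adj W * W) $$ (i,j) = 1\<^sub>m m $$ (i,j)" .
  qed (use W in auto)
  moreover have "col W 0 = v"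
  proof -
    have "us!0 = v"
    proof -
      have "v \<bullet>c v = complex_of_real 1" using v1 by simp
      then have "Re (v \<bullet>c v) = 1" by simp
      then show ?thesis using ws0 m ws(3) by (simp add: us_def nz_def)
    qed
    moreover have "col W 0 = us ! 0" unfolding W_def using usc[of 0] m ws(3)
      by (intro col_mat_of_cols) (auto simp: us_def)
    ultimately show ?thesis by simp
  qed
  ultimately show ?thesis using W by blast
qed

definition diagm :: "real list \<Rightarrow> complex mat" where
  "diagm d = mat (length d) (length d) (\<lambda>(i,j). if i = j then complex_of_real (d!i) else 0)"

lemma diagm_carrier[simp]: "diagm d \<in> carrier_mat (length d) (length d)"
  by (simp add: diagm_def)

lemma proots_linear_prod: "proots (\<Prod>a\<leftarrow>as. [:- a, 1:]) = mset (as :: complex list)"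
proof (induction as)
  case (Cons a as)
  have nz: "(\<Prod>a\<leftarrow>as. [:- a, 1:]) \<noteq> 0" by (auto simp: prod_list_zero_iff)
  have "proots (\<Prod>a\<leftarrow>a#as. [:- a, 1:]) = proots ([:-a,1:] * (\<Prod>a\<leftarrow>as. [:- a, 1:]))" by simp
  also have "\<dots> = proots [:-a,1:] + proots (\<Prod>a\<leftarrow>as. [:- a, 1:])"
    by (rule proots_mult) (use nz in auto)
  also have "\<dots> = mset (a # as)" using Cons by simp
  finally show ?case .
qed simp

lemma char_poly_nz: "A \<in> carrier_mat n n \<Longrightarrow> char_poly A \<noteq> 0"
  using degree_monic_char_poly[of A n] by auto

lemma sq_mult_carrier: "A \<in> carrier_mat n n \<Longrightarrow> B \<in> carrier_mat n n \<Longrightarrow> A * B \<in> carrier_mat n n"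
  by auto

lemma massoc: "A \<in> carrier_mat n n \<Longrightarrow> B \<in> carrier_mat n n \<Longrightarrow> C \<in> carrier_mat n n \<Longrightarrow> A * B * C = A * (B * C)"
  by simp

lemma unitary_right: assumes "W \<in> carrier_mat n n" "adj W * W = 1\<^sub>m n" shows "W * adj W = 1\<^sub>m n"
  using mat_mult_left_right_inverse[of "adj W" n W] assms by auto

lemma unitary_char_poly: assumes W: "W \<in> carrier_mat n n" and u: "adj W * W = 1\<^sub>m n"
  and H: "H \<in> carrier_mat n n"
  shows "char_poly (adj W * H * W) = char_poly H"
proof -
  have u2: "W * adj W = 1\<^sub>m n" using unitary_right[OF W u] .
  have aW: "adj W \<in> carrier_mat n n" using W by simp
  have "W * (adj W * H * W) * adj W = W * (adj W * H * W * adj W)"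
    by (rule massoc) (use W aW H in \<open>auto intro!: sq_mult_carrier\<close>)
  also have "adj W * H * W * adj W = adj W * H * (W * adj W)"
    by (rule massoc) (use W aW H in \<open>auto intro!: sq_mult_carrier\<close>)
  also have "\<dots> = adj W * H" using u2 aW H by simp
  also have "W * (adj W * H) = (W * adj W) * H" using W aW H by (simp add: massoc)
  also have "\<dots> = H" using u2 H by simp
  finally have "H = W * (adj W * H * W) * adj W" ..
  then have "similar_mat H (adj W * H * W)"
    using W H u u2 by (intro similar_matI[where P=W and Q="adj W" and n=n]) auto
  then show ?thesis by (simp add: char_poly_similar)
qed

lemma hermitian_eig_real: assumes h: "hermitian_mat H" and H: "H \<in> carrier_mat n n"
  and v: "v \<in> carrier_vec n" "v \<noteq> 0\<^sub>v n" and ev: "H *\<^sub>v v = e \<cdot>\<^sub>v v"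
  shows "e = complex_of_real (Re e)"
proof -
  have aH: "adj H = H" using hermitian_adjD[OF h H] .
  have s: "conjugate v \<bullet> v \<noteq> 0"
    using conjugate_square_greater_0_vec[OF v(1)] v comm_scalar_prod[of "conjugate v" n v] v(1) by auto
  have "conjugate v \<bullet> (H *\<^sub>v v) = conjugate (adj H *\<^sub>v v) \<bullet> v" using sprod_adj[OF H v(1) v(1)] .
  then have "e * (conjugate v \<bullet> v) = cnj e * (conjugate v \<bullet> v)"
    using ev v(1) aH by (simp add: conjugate_smult_vec)
  then have "e = cnj e" using s by simp
  then show ?thesis by (simp add: complex_eq_iff)
qed

lemma adj_four_block: assumes "A \<in> carrier_mat n1 m1" "B \<in> carrier_mat n1 m2" "C \<in> carrier_mat n2 m1" "D \<in> carrier_mat n2 m2"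
  shows "adj (four_block_mat A B C D) = four_block_mat (adj A) (adj C) (adj B) (adj D)"
  using assms by (intro eq_matI) auto

lemma four_block_one: "four_block_mat (1\<^sub>m a) (0\<^sub>m a b) (0\<^sub>m b a) (1\<^sub>m b) = 1\<^sub>m (a + b)"
  by (intro eq_matI) auto

lemma four_block_diag_mult: assumes "A1 \<in> carrier_mat a a" "D1 \<in> carrier_mat b b" "A2 \<in> carrier_mat a a" "D2 \<in> carrier_mat b b"
  shows "four_block_mat A1 (0\<^sub>m a b) (0\<^sub>m b a) D1 * four_block_mat A2 (0\<^sub>m a b) (0\<^sub>m b a) D2
    = four_block_mat (A1 * A2) (0\<^sub>m a b) (0\<^sub>m b a) (D1 * D2)"
  by (subst mult_four_block_mat[OF assms(1) zero_carrier_mat zero_carrier_mat assms(2) assms(3) zero_carrier_mat zero_carrier_mat assms(4)])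
    (use assms in simp)

lemma spectral:
  fixes H :: "complex mat"
  assumes "hermitian_mat H" "H \<in> carrier_mat m m"
  shows "\<exists>U d. U \<in> carrier_mat m m \<and> adj U * U = 1\<^sub>m m \<and> length d = m \<and> sorted d
     \<and> H * U = U * diagm d \<and> eig_mset H = mset (map complex_of_real d)"
  using assms
proof (induction m arbitrary: H)
  case 0
  have "degree (char_poly H) = 0 \<and> coeff (char_poly H) 0 = 1" using degree_monic_char_poly[OF 0(2)] .
  then have "char_poly H = 1" by (metis degree_0_id one_pCons)
  then have "eig_mset H = {#}" by (simp add: eig_mset_def)
  moreover have "H * 1\<^sub>m 0 = 1\<^sub>m 0 * diagm []" using 0(2) by (intro eq_matI) (auto simp: diagm_def)
  ultimately show ?case by (intro exI[of _ "1\<^sub>m 0"] exI[of _ "[]"]) auto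
next
  case (Suc m)
  note h = Suc(2) and Hc = Suc(3)
  obtain as where cp: "char_poly H = (\<Prod>a\<leftarrow>as. [:- a, 1:])" and las: "length as = Suc m"
    using char_poly_factorized[OF Hc] by blast
  have eigH: "eig_mset H = mset as" unfolding eig_mset_def cp proots_linear_prod ..
  have "as \<noteq> []" using las by auto
  then obtain e where e_in: "e \<in> set as" and e_min: "\<forall>a\<in>set as. Re e \<le> Re a"
  proof -
    assume r: "\<And>e. e \<in> set as \<Longrightarrow> \<forall>a\<in>set as. Re e \<le> Re a \<Longrightarrow> thesis"
    have "Min (Re ` set as) \<in> Re ` set as" using \<open>as \<noteq> []\<close> by (intro Min_in) auto
    then obtain e where "e \<in> set as" "Re e = Min (Re ` set as)" by auto
    then show thesis using r by auto
  qed
  have "poly (char_poly H) e = 0" using e_in unfolding cp by (auto simp: poly_prod_list prod_list_zero_iff)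
  then have ev: "eigenvalue H e" using eigenvalue_root_char_poly[OF Hc] by simp
  define v where "v = find_eigenvector H e"
  have "eigenvector H v e" using find_eigenvector[OF Hc ev] unfolding v_def .
  then have v: "v \<in> carrier_vec (Suc m)" "v \<noteq> 0\<^sub>v (Suc m)" "H *\<^sub>v v = e \<cdot>\<^sub>v v"
    unfolding eigenvector_def using Hc by auto
  have e_real: "e = complex_of_real (Re e)" using hermitian_eig_real[OF h Hc v] .
  define r where "r = Re (v \<bullet>c v)"
  have vv: "v \<bullet>c v = complex_of_real r" "r > 0"
  proof -
    have "v \<bullet>c v > 0" using v by simp
    then show "v \<bullet>c v = complex_of_real r" "r > 0" by (auto simp: r_def complex_eq_iff less_complex_def)
  qed
  define v1 where "v1 = complex_of_real (1 / sqrt r) \<cdot>\<^sub>v v"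
  have v1: "v1 \<in> carrier_vec (Suc m)" using v by (simp add: v1_def)
  have v11: "v1 \<bullet>c v1 = 1"
  proof -
    have "v1 \<bullet>c v1 = complex_of_real (1 / sqrt r) * complex_of_real (1 / sqrt r) * (v \<bullet>c v)"
      using v by (simp add: v1_def conjugate_smult_vec)
    also have "\<dots> = complex_of_real ((1 / sqrt r) * (1 / sqrt r) * r)" using vv by (simp only: of_real_mult)
    also have "(1 / sqrt r) * (1 / sqrt r) * r = 1" using vv(2) by (simp add: field_simps)
    finally show ?thesis by simp
  qed
  have Hv1: "H *\<^sub>v v1 = e \<cdot>\<^sub>v v1"
    using v Hc by (simp add: v1_def mult_mat_vec smult_smult_assoc mult.commute)
  obtain W where W: "W \<in> carrier_mat (Suc m) (Suc m)" and uW: "adj W * W = 1\<^sub>m (Suc m)" and cW: "col W 0 = v1"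
    using unitary_completion[OF v1 v11] by blast
  have aW: "adj W \<in> carrier_mat (Suc m) (Suc m)" using W by simp
  have uW2: "W * adj W = 1\<^sub>m (Suc m)" using unitary_right[OF W uW] .
  define H1 where "H1 = adj W * H * W"
  have H1c: "H1 \<in> carrier_mat (Suc m) (Suc m)" using W Hc by (auto simp: H1_def intro!: sq_mult_carrier)
  have aH: "adj H = H" using hermitian_adjD[OF h Hc] .
  have aH1: "adj H1 = H1"
  proof -
    have "adj H1 = adj W * (adj H * adj (adj W))" unfolding H1_def
      using W Hc aW by (simp add: adj_mult[of _ "Suc m" "Suc m"] sq_mult_carrier)
    also have "\<dots> = H1" using aH H1_def W Hc aW by (simp add: massoc)
    finally show ?thesis .
  qed
  have hH1: "hermitian_mat H1" using hermitian_adjI[OF H1c aH1] .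
  have col0: "H1 $$ (i, 0) = (if i = 0 then e else 0)" if i: "i < Suc m" for i
  proof -
    have "H1 $$ (i, 0) = (adj W * (H * W)) $$ (i, 0)" unfolding H1_def using massoc[OF aW Hc W] by simp
    also have "\<dots> = row (adj W) i \<bullet> col (H * W) 0" using i W Hc by simp
    also have "col (H * W) 0 = e \<cdot>\<^sub>v col W 0"
    proof -
      have "col (H * W) 0 = H *\<^sub>v col W 0" using col_mult2[OF Hc W, of 0] by simp
      then show ?thesis using Hv1 cW by simp
    qed
    also have "row (adj W) i \<bullet> (e \<cdot>\<^sub>v col W 0) = e * (row (adj W) i \<bullet> col W 0)"
      using W i by simp
    also have "row (adj W) i \<bullet> col W 0 = (adj W * W) $$ (i, 0)" using W i by simp
    also have "\<dots> = (if i = 0 then 1 else 0)" using uW i by simp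
    finally show ?thesis by simp
  qed
  have row0: "H1 $$ (0, j) = (if j = 0 then e else 0)" if j: "j < Suc m" for j
  proof -
    have "H1 $$ (0, j) = cnj (H1 $$ (j, 0))" using hermitianD[OF hH1, of 0 j] j H1c by simp
    also have "\<dots> = (if j = 0 then e else 0)" using col0[OF j] e_real by (metis complex_cnj_complex_of_real complex_cnj_zero)
    finally show ?thesis .
  qed
  define A3 where "A3 = mat m m (\<lambda>(i,j). H1 $$ (Suc i, Suc j))"
  define A1 where "A1 = mat 1 1 (\<lambda>_. e)"
  have A3c: "A3 \<in> carrier_mat m m" by (simp add: A3_def)
  have A1c: "A1 \<in> carrier_mat 1 1" by (simp add: A1_def)
  have H1b: "H1 = four_block_mat A1 (0\<^sub>m 1 m) (0\<^sub>m m 1) A3"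
  proof (rule eq_matI)
    fix i j assume ij: "i < dim_row (four_block_mat A1 (0\<^sub>m 1 m) (0\<^sub>m m 1) A3)" "j < dim_col (four_block_mat A1 (0\<^sub>m 1 m) (0\<^sub>m m 1) A3)"
    then have i: "i < Suc m" and j: "j < Suc m" using A1c A3c by auto
    show "H1 $$ (i, j) = four_block_mat A1 (0\<^sub>m 1 m) (0\<^sub>m m 1) A3 $$ (i, j)"
    proof (cases "i = 0 \<or> j = 0")
      case True
      then show ?thesis using col0[OF i] row0[OF j] i j A1c A3c by (auto simp: A1_def)
    next
      case False
      then obtain i' j' where "i = Suc i'" "j = Suc j'" by (cases i; cases j) auto
      then show ?thesis using i j A1c A3c by (auto simp: A3_def)
    qed
  qed (use A1c A3c H1c in auto)
  have hA3: "hermitian_mat A3"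
    unfolding hermitian_mat_def
  proof (intro conjI allI impI)
    fix i j assume "i < dim_row A3" "j < dim_row A3"
    then show "A3 $$ (i, j) = cnj (A3 $$ (j, i))" using hermitianD[OF hH1, of "Suc i" "Suc j"] H1c
      by (auto simp: A3_def)
  qed (simp add: A3_def)
  from Suc.IH[OF hA3 A3c] obtain U3 d3 where U3: "U3 \<in> carrier_mat m m" and uU3: "adj U3 * U3 = 1\<^sub>m m"
    and ld3: "length d3 = m" and sd3: "sorted d3" and HU3: "A3 * U3 = U3 * diagm d3"
    and eig3: "eig_mset A3 = mset (map complex_of_real d3)" by blast
  have cpH: "char_poly H = [:-e, 1:] * char_poly A3"
  proof -
    have "char_poly H = char_poly H1" using unitary_char_poly[OF W uW Hc] unfolding H1_def ..
    also have "\<dots> = char_poly A1 * char_poly A3" unfolding H1b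
      by (rule char_poly_four_block_zeros_col[OF A1c _ A3c]) simp
    also have "char_poly A1 = [:-e, 1:]"
      by (simp add: A1_def char_poly_defs det_def sign_def)
    finally show ?thesis .
  qed
  have eigH2: "eig_mset H = add_mset e (eig_mset A3)"
  proof -
    have "eig_mset H = proots [:-e, 1:] + proots (char_poly A3)"
      unfolding eig_mset_def cpH by (rule proots_mult) (use char_poly_nz[OF A3c] in auto)
    then show ?thesis by (simp add: eig_mset_def)
  qed
  define d where "d = Re e # d3"
  have sd: "sorted d"
  proof -
    have "Re e \<le> x" if "x \<in> set d3" for x
    proof -
      have "complex_of_real x \<in># eig_mset A3" using that eig3 by simp
      then have "complex_of_real x \<in> set as" proof -
        assume "complex_of_real x \<in># eig_mset A3"
        then have "complex_of_real x \<in># add_mset e (eig_mset A3)" by simp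
        then have "complex_of_real x \<in># mset as" using eigH eigH2 by metis
        then show ?thesis by simp
      qed
      then show ?thesis using e_min by force
    qed
    then show ?thesis using sd3 by (simp add: d_def)
  qed
  have eigd: "eig_mset H = mset (map complex_of_real d)"
    using eigH2 eig3 e_real by (simp add: d_def)
  define B where "B = four_block_mat (1\<^sub>m 1) (0\<^sub>m 1 m) (0\<^sub>m m 1) U3"
  have "B \<in> carrier_mat (1 + m) (1 + m)" unfolding B_def by (rule four_block_carrier_mat) (use U3 in auto)
  then have Bc: "B \<in> carrier_mat (Suc m) (Suc m)" by simp
  have aB: "adj B = four_block_mat (1\<^sub>m 1) (0\<^sub>m 1 m) (0\<^sub>m m 1) (adj U3)"
    unfolding B_def using adj_four_block[OF one_carrier_mat zero_carrier_mat zero_carrier_mat U3] by simp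
  have uB: "adj B * B = 1\<^sub>m (Suc m)"
  proof -
    have "adj B * B = four_block_mat (1\<^sub>m 1) (0\<^sub>m 1 m) (0\<^sub>m m 1) (adj U3 * U3)"
      unfolding aB unfolding B_def using four_block_diag_mult[OF one_carrier_mat[of 1] adj_carrier[OF U3] one_carrier_mat[of 1] U3] by simp
    also have "\<dots> = 1\<^sub>m (Suc m)" using uU3 four_block_one[of 1 m] by simp
    finally show ?thesis .
  qed
  define U where "U = W * B"
  have Uc: "U \<in> carrier_mat (Suc m) (Suc m)" using W Bc by (simp add: U_def)
  have uU: "adj U * U = 1\<^sub>m (Suc m)"
  proof -
    have "adj U * U = adj B * adj W * (W * B)" unfolding U_def using W Bc by (simp add: adj_mult)
    also have "\<dots> = adj B * (adj W * W * B)"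
      using massoc[OF adj_carrier[OF Bc] aW sq_mult_carrier[OF W Bc]] massoc[OF aW W Bc] by simp
    also have "\<dots> = 1\<^sub>m (Suc m)" using uW Bc uB by simp
    finally show ?thesis .
  qed
  have dd: "diagm d = four_block_mat A1 (0\<^sub>m 1 m) (0\<^sub>m m 1) (diagm d3)"
    using ld3 e_real by (intro eq_matI) (auto simp: diagm_def d_def A1_def nth_Cons')
  have HU: "H * U = U * diagm d"
  proof -
    have "H * U = W * (H1 * B)"
    proof -
      have HWc: "H * W \<in> carrier_mat (Suc m) (Suc m)" using Hc W by simp
      have WH1: "W * H1 = H * W" unfolding H1_def
        using massoc[OF aW Hc W] massoc[OF W aW HWc] uW2 left_mult_one_mat[OF HWc] by simp
      have "H * U = (H * W) * B" unfolding U_def using massoc[OF Hc W Bc] by simp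
      also have "\<dots> = W * (H1 * B)" unfolding WH1[symmetric] using massoc[OF W H1c Bc] by simp
      finally show ?thesis .
    qed
    also have "H1 * B = four_block_mat A1 (0\<^sub>m 1 m) (0\<^sub>m m 1) (A3 * U3)"
      unfolding H1b B_def using four_block_diag_mult[OF A1c A3c one_carrier_mat[of 1] U3] A1c by simp
    also have "\<dots> = B * diagm d"
      unfolding B_def dd HU3 using four_block_diag_mult[OF one_carrier_mat[of 1] U3 A1c diagm_carrier[of d3, unfolded ld3]] A1c ld3 by simp
    also have "W * (B * diagm d) = U * diagm d" unfolding U_def using massoc[OF W Bc, of "diagm d"] diagm_carrier[of d] ld3 by (simp add: d_def)
    finally show ?thesis .
  qed
  show ?case
    by (intro exI[of _ U] exI[of _ d]) (use Uc uU sd eigd HU ld3 in \<open>auto simp: d_def\<close>)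
qed

lemma eig_list_d: assumes "eig_mset H = mset (map complex_of_real d)" "sorted d"
  shows "eig_list H = d"
proof -
  have "image_mset Re (mset (map complex_of_real d)) = mset d"
    by (induction d) auto
  then show ?thesis using assms by (simp add: eig_list_def sorted_sort_id)
qed

lemma lam_d: assumes "eig_mset H = mset (map complex_of_real d)" "sorted d"
  shows "lam H k = d ! (k - 1)"
  using eig_list_d[OF assms] by (simp add: lam_def)

lemma diagm_mult_vec: assumes "c \<in> carrier_vec (length d)"
  shows "diagm d *\<^sub>v c = vec (length d) (\<lambda>i. complex_of_real (d!i) * c$i)"
proof (rule eq_vecI)
  fix i assume "i < dim_vec (vec (length d) (\<lambda>i. complex_of_real (d!i) * c$i))"
  then have i: "i < length d" by simp
  have "(diagm d *\<^sub>v c) $ i = (\<Sum>j<length d. (if i = j then complex_of_real (d!i) else 0) * c$j)"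
    using i assms by (simp add: diagm_def scalar_prod_def atLeast0LessThan)
  also have "\<dots> = (\<Sum>j<length d. if j = i then complex_of_real (d!i) * c$i else 0)"
    by (intro sum.cong) auto
  also have "\<dots> = complex_of_real (d!i) * c$i"
    using i by (simp add: sum.delta)
  finally show "(diagm d *\<^sub>v c) $ i = vec (length d) (\<lambda>i. complex_of_real (d!i) * c$i) $ i" using i by simp
qed (simp add: diagm_def)

lemma qf_coord: assumes H: "H \<in> carrier_mat m m" and U: "U \<in> carrier_mat m m"
  and uU: "adj U * U = 1\<^sub>m m" and ld: "length d = m" and HU: "H * U = U * diagm d"
  and c: "c \<in> carrier_vec m"
  shows "qf H (U *\<^sub>v c) = (\<Sum>i<m. complex_of_real (d!i) * (cnj (c$i) * c$i))"
    and "conjugate (U *\<^sub>v c) \<bullet> (U *\<^sub>v c) = (\<Sum>i<m. cnj (c$i) * c$i)"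
proof -
  have Dc: "diagm d \<in> carrier_mat m m" using ld by (metis diagm_carrier)
  have Uc: "U *\<^sub>v c \<in> carrier_vec m" using U c by simp
  have aa: "adj U *\<^sub>v (U *\<^sub>v c) = c" using uU U c
    by (metis assoc_mult_mat_vec adj_carrier one_mult_mat_vec)
  have "qf H (U *\<^sub>v c) = conjugate (U *\<^sub>v c) \<bullet> (H *\<^sub>v (U *\<^sub>v c))" using qf_sprod[OF H Uc] .
  also have "H *\<^sub>v (U *\<^sub>v c) = U *\<^sub>v (diagm d *\<^sub>v c)"
    using HU H U c Dc by (metis assoc_mult_mat_vec)
  also have "conjugate (U *\<^sub>v c) \<bullet> (U *\<^sub>v (diagm d *\<^sub>v c)) = conjugate c \<bullet> (diagm d *\<^sub>v c)"
    using sprod_adj[OF U Uc, of "diagm d *\<^sub>v c"] aa Dc c by simp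
  also have "\<dots> = (\<Sum>i<m. complex_of_real (d!i) * (cnj (c$i) * c$i))"
    using c ld by (simp add: diagm_mult_vec scalar_prod_def atLeast0LessThan mult.commute mult.left_commute)
  finally show "qf H (U *\<^sub>v c) = (\<Sum>i<m. complex_of_real (d!i) * (cnj (c$i) * c$i))" .
  have "conjugate (U *\<^sub>v c) \<bullet> (U *\<^sub>v c) = conjugate c \<bullet> c"
    using sprod_adj[OF U Uc c] aa by simp
  also have "\<dots> = (\<Sum>i<m. cnj (c$i) * c$i)" using c by (simp add: scalar_prod_def atLeast0LessThan)
  finally show "conjugate (U *\<^sub>v c) \<bullet> (U *\<^sub>v c) = (\<Sum>i<m. cnj (c$i) * c$i)" .
qed

lemma Re_cnj_sq: "Re (cnj z * z) = (cmod z)^2"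
  unfolding cmod_power2 by (simp add: power2_eq_square)

lemma Re_cnj_sq2: "Re (complex_of_real a * (cnj z * z)) = a * (cmod z)^2"
  unfolding cmod_power2 by (simp add: power2_eq_square algebra_simps)

lemma Re_qf_coord: assumes H: "H \<in> carrier_mat m m" and U: "U \<in> carrier_mat m m"
  and uU: "adj U * U = 1\<^sub>m m" and ld: "length d = m" and HU: "H * U = U * diagm d"
  and c: "c \<in> carrier_vec m"
  shows "Re (qf H (U *\<^sub>v c)) = (\<Sum>i<m. d!i * (cmod (c$i))^2)"
    and "Re (conjugate (U *\<^sub>v c) \<bullet> (U *\<^sub>v c)) = (\<Sum>i<m. (cmod (c$i))^2)"
  using qf_coord[OF assms] by (simp_all only: Re_sum Re_cnj_sq Re_cnj_sq2)

lemma exists_kernel: fixes G :: "complex mat"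
  assumes G: "G \<in> carrier_mat p q" and pq: "p < q"
  shows "\<exists>c \<in> carrier_vec q. c \<noteq> 0\<^sub>v q \<and> G *\<^sub>v c = 0\<^sub>v p"
proof -
  define G' where "G' = mat\<^sub>r q q (\<lambda>i. if i = q - 1 then 0\<^sub>v q else (\<lambda>i. if i < p then row G i else 0\<^sub>v q) i)"
  have G'c: "G' \<in> carrier_mat q q" by (simp add: G'_def)
  have "det G' = 0" unfolding G'_def
    by (rule det_row_0) (use pq G in auto)
  then obtain v where v: "v \<in> carrier_vec q" "v \<noteq> 0\<^sub>v q" "G' *\<^sub>v v = 0\<^sub>v q"
    using det_0_iff_vec_prod_zero_field[OF G'c] by blast
  have "G *\<^sub>v v = 0\<^sub>v p"
  proof (rule eq_vecI)
    fix r assume "r < dim_vec (0\<^sub>v p)"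
    then have r: "r < p" by simp
    have "(G' *\<^sub>v v) $ r = 0" using v(3) r pq by simp
    moreover have "(G' *\<^sub>v v) $ r = row G r \<bullet> v" using r pq G by (simp add: G'_def)
    ultimately show "(G *\<^sub>v v) $ r = 0\<^sub>v p $ r" using r G by simp
  qed (use G in simp)
  then show ?thesis using v by blast
qed

lemma exists_kernel_window: fixes G :: "complex mat"
  assumes G: "G \<in> carrier_mat p n" and pq: "p < q" and oq: "off + q \<le> n"
  shows "\<exists>c \<in> carrier_vec n. c \<noteq> 0\<^sub>v n \<and> G *\<^sub>v c = 0\<^sub>v p \<and> (\<forall>i<n. c$i \<noteq> 0 \<longrightarrow> off \<le> i \<and> i < off + q)"
proof -
  define F where "F = mat p q (\<lambda>(r,s). G $$ (r, s + off))"
  have Fc: "F \<in> carrier_mat p q" by (simp add: F_def)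
  obtain c' where c': "c' \<in> carrier_vec q" "c' \<noteq> 0\<^sub>v q" "F *\<^sub>v c' = 0\<^sub>v p"
    using exists_kernel[OF Fc pq] by blast
  define c where "c = vec n (\<lambda>i. if off \<le> i \<and> i < off + q then c' $ (i - off) else 0)"
  have cc: "c \<in> carrier_vec n" by (simp add: c_def)
  have supp: "\<forall>i<n. c$i \<noteq> 0 \<longrightarrow> off \<le> i \<and> i < off + q" by (auto simp: c_def)
  have "c \<noteq> 0\<^sub>v n"
  proof
    assume c0: "c = 0\<^sub>v n"
    have "c' = 0\<^sub>v q"
    proof (rule eq_vecI)
      fix s assume "s < dim_vec (0\<^sub>v q)"
      then have s: "s < q" by simp
      have "c $ (s + off) = c' $ s" using s oq by (simp add: c_def)
      then show "c' $ s = 0\<^sub>v q $ s" using c0 s oq by simp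
    qed (use c' in simp)
    then show False using c' by simp
  qed
  moreover have "G *\<^sub>v c = 0\<^sub>v p"
  proof (rule eq_vecI)
    fix r assume "r < dim_vec (0\<^sub>v p)"
    then have r: "r < p" by simp
    have "(G *\<^sub>v c) $ r = (\<Sum>i\<in>{0..<n}. G $$ (r,i) * c $ i)"
      using G r cc by (simp add: scalar_prod_def)
    also have "\<dots> = (\<Sum>i\<in>{off..<off+q}. G $$ (r,i) * c $ i)"
      by (rule sum.mono_neutral_right) (use oq supp in auto)
    also have "\<dots> = (\<Sum>s\<in>{0..<q}. G $$ (r,s+off) * c $ (s+off))"
      using sum.shift_bounds_nat_ivl[of "\<lambda>i. G $$ (r,i) * c $ i" 0 off q] by (simp add: add.commute)
    also have "\<dots> = (\<Sum>s\<in>{0..<q}. F $$ (r,s) * c' $ s)"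
      using r oq by (intro sum.cong) (auto simp: F_def c_def)
    also have "\<dots> = (F *\<^sub>v c') $ r" using r c'(1) Fc by (simp add: scalar_prod_def)
    also have "\<dots> = 0" using c' r by simp
    finally show "(G *\<^sub>v c) $ r = 0\<^sub>v p $ r" using r by simp
  qed (use G in simp)
  ultimately show ?thesis using cc supp by blast
qed

lemma sum_lower: fixes d :: "real list"
  assumes sd: "sorted d" and ld: "length d = m" and k: "1 \<le> k" "k \<le> m"
  and z: "\<forall>j<m. f j \<noteq> 0 \<longrightarrow> k - 1 \<le> j" and f: "\<forall>j. f j \<ge> 0"
  shows "d!(k-1) * (\<Sum>i<m. f i) \<le> (\<Sum>i<m. d!i * f i)"
proof -
  have "d!(k-1) * (\<Sum>i<m. f i) = (\<Sum>i<m. d!(k-1) * f i)" by (simp add: sum_distrib_left)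
  also have "\<dots> \<le> (\<Sum>i<m. d!i * f i)"
  proof (rule sum_mono)
    fix i assume i: "i \<in> {..<m}"
    show "d!(k-1) * f i \<le> d!i * f i"
    proof (cases "f i = 0")
      case False
      then have "k - 1 \<le> i" using z i by auto
      then have "d!(k-1) \<le> d!i" using sd ld i by (auto intro: sorted_nth_mono)
      then show ?thesis using f by (simp add: mult_right_mono)
    qed simp
  qed
  finally show ?thesis .
qed

lemma sum_upper: fixes d :: "real list"
  assumes sd: "sorted d" and ld: "length d = m" and k: "1 \<le> k" "k \<le> m"
  and z: "\<forall>j<m. f j \<noteq> 0 \<longrightarrow> j < k" and f: "\<forall>j. f j \<ge> 0"
  shows "(\<Sum>i<m. d!i * f i) \<le> d!(k-1) * (\<Sum>i<m. f i)"
proof -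
  have "(\<Sum>i<m. d!i * f i) \<le> (\<Sum>i<m. d!(k-1) * f i)"
  proof (rule sum_mono)
    fix i assume i: "i \<in> {..<m}"
    show "d!i * f i \<le> d!(k-1) * f i"
    proof (cases "f i = 0")
      case False
      then have "i \<le> k - 1" using z i by auto
      then have "d!i \<le> d!(k-1)" using sd ld k by (auto intro: sorted_nth_mono)
      then show ?thesis using f by (simp add: mult_right_mono)
    qed simp
  qed
  also have "\<dots> = d!(k-1) * (\<Sum>i<m. f i)" by (simp add: sum_distrib_left)
  finally show ?thesis .
qed

lemma sum_sq_pos: assumes c: "c \<in> carrier_vec n" "c \<noteq> 0\<^sub>v n"
  shows "(\<Sum>i<n. (cmod (c$i))^2) > 0"
proof -
  obtain i where i: "i < n" "c $ i \<noteq> 0"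
    using c by (metis eq_vecI carrier_vecD index_zero_vec(1) index_zero_vec(2))
  have "(cmod (c$i))^2 \<le> (\<Sum>i<n. (cmod (c$i))^2)"
    by (rule member_le_sum) (use i in auto)
  moreover have "(cmod (c$i))^2 > 0" using i by simp
  ultimately show ?thesis by linarith
qed

lemma lam_lower:
  assumes h: "hermitian_mat T" and Tc: "T \<in> carrier_mat n n" and k: "1 \<le> k" "k \<le> n"
    and G: "G \<in> carrier_mat (k-1) n"
    and hyp: "\<forall>u\<in>carrier_vec n. G *\<^sub>v u = 0\<^sub>v (k-1) \<longrightarrow> \<gamma> * Re (conjugate u \<bullet> u) \<le> Re (qf T u)"
  shows "\<gamma> \<le> lam T k"
proof -
  obtain U d where U: "U \<in> carrier_mat n n" and uU: "adj U * U = 1\<^sub>m n" and ld: "length d = n"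
    and sd: "sorted d" and TU: "T * U = U * diagm d" and eig: "eig_mset T = mset (map complex_of_real d)"
    using spectral[OF h Tc] by blast
  have GU: "G * U \<in> carrier_mat (k-1) n" using G U by simp
  obtain c where c: "c \<in> carrier_vec n" "c \<noteq> 0\<^sub>v n" "(G*U) *\<^sub>v c = 0\<^sub>v (k-1)"
     "\<forall>i<n. c$i \<noteq> 0 \<longrightarrow> 0 \<le> i \<and> i < 0 + k"
    using exists_kernel_window[OF GU, of k 0] k by auto
  define u where "u = U *\<^sub>v c"
  have uc: "u \<in> carrier_vec n" using U c by (simp add: u_def)
  have "G *\<^sub>v u = 0\<^sub>v (k-1)" using c(3) assoc_mult_mat_vec[OF G U c(1)] by (simp add: u_def)
  then have le1: "\<gamma> * Re (conjugate u \<bullet> u) \<le> Re (qf T u)" using hyp uc by blast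
  note co = Re_qf_coord[OF Tc U uU ld TU c(1)]
  have up: "(\<Sum>i<n. d!i * (cmod (c$i))^2) \<le> d!(k-1) * (\<Sum>i<n. (cmod (c$i))^2)"
    by (rule sum_upper[OF sd ld k]) (use c(4) in auto)
  have pos: "(\<Sum>i<n. (cmod (c$i))^2) > 0" using sum_sq_pos[OF c(1) c(2)] .
  have "\<gamma> * (\<Sum>i<n. (cmod (c$i))^2) \<le> d!(k-1) * (\<Sum>i<n. (cmod (c$i))^2)"
    using le1[unfolded u_def co] up by linarith
  then have "\<gamma> \<le> d!(k-1)" using pos by simp
  then show ?thesis using lam_d[OF eig sd] by simp
qed

lemma lam_upper:
  assumes h: "hermitian_mat T" and Tc: "T \<in> carrier_mat n n" and k: "1 \<le> k" "k \<le> n"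
    and G: "G \<in> carrier_mat (n-k) n"
    and hyp: "\<forall>u\<in>carrier_vec n. G *\<^sub>v u = 0\<^sub>v (n-k) \<longrightarrow> Re (qf T u) \<le> \<gamma> * Re (conjugate u \<bullet> u)"
  shows "lam T k \<le> \<gamma>"
proof -
  obtain U d where U: "U \<in> carrier_mat n n" and uU: "adj U * U = 1\<^sub>m n" and ld: "length d = n"
    and sd: "sorted d" and TU: "T * U = U * diagm d" and eig: "eig_mset T = mset (map complex_of_real d)"
    using spectral[OF h Tc] by blast
  have GU: "G * U \<in> carrier_mat (n-k) n" using G U by simp
  obtain c where c: "c \<in> carrier_vec n" "c \<noteq> 0\<^sub>v n" "(G*U) *\<^sub>v c = 0\<^sub>v (n-k)"
     "\<forall>i<n. c$i \<noteq> 0 \<longrightarrow> k - 1 \<le> i \<and> i < k - 1 + (n - k + 1)"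
    using exists_kernel_window[OF GU, of "n-k+1" "k-1"] k by auto
  define u where "u = U *\<^sub>v c"
  have uc: "u \<in> carrier_vec n" using U c by (simp add: u_def)
  have "G *\<^sub>v u = 0\<^sub>v (n-k)" using c(3) assoc_mult_mat_vec[OF G U c(1)] by (simp add: u_def)
  then have le1: "Re (qf T u) \<le> \<gamma> * Re (conjugate u \<bullet> u)" using hyp uc by blast
  note co = Re_qf_coord[OF Tc U uU ld TU c(1)]
  have lo: "d!(k-1) * (\<Sum>i<n. (cmod (c$i))^2) \<le> (\<Sum>i<n. d!i * (cmod (c$i))^2)"
    by (rule sum_lower[OF sd ld k]) (use c(4) in auto)
  have pos: "(\<Sum>i<n. (cmod (c$i))^2) > 0" using sum_sq_pos[OF c(1) c(2)] .
  have "d!(k-1) * (\<Sum>i<n. (cmod (c$i))^2) \<le> \<gamma> * (\<Sum>i<n. (cmod (c$i))^2)"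
    using le1[unfolded u_def co] lo by linarith
  then have "d!(k-1) \<le> \<gamma>" using pos by simp
  then show ?thesis using lam_d[OF eig sd] by simp
qed

lemma posdef_hermitian: "pos_def_cmat T \<Longrightarrow> hermitian_mat T"
  unfolding pos_def_cmat_def by simp

lemma posdefD: assumes "pos_def_cmat T" "T \<in> carrier_mat n n" "v \<in> carrier_vec n" "v \<noteq> 0\<^sub>v n"
  shows "Re (qf T v) > 0"
  using assms unfolding pos_def_cmat_def qf_def by auto

lemma posdef_lam_pos: assumes p: "pos_def_cmat T" and Tc: "T \<in> carrier_mat n n" and k: "1 \<le> k" "k \<le> n"
  shows "lam T k > 0"
proof -
  obtain U d where U: "U \<in> carrier_mat n n" and uU: "adj U * U = 1\<^sub>m n" and ld: "length d = n"
    and sd: "sorted d" and TU: "T * U = U * diagm d" and eig: "eig_mset T = mset (map complex_of_real d)"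
    using spectral[OF posdef_hermitian[OF p] Tc] by blast
  define i where "i = k - 1"
  have i: "i < n" using k by (simp add: i_def)
  define c where "c = (unit_vec n i :: complex vec)"
  have c: "c \<in> carrier_vec n" by (simp add: c_def)
  note co = Re_qf_coord[OF Tc U uU ld TU c]
  have s1: "(\<Sum>j<n. d!j * (cmod (c$j))^2) = d!i"
  proof -
    have "(\<Sum>j<n. d!j * (cmod (c$j))^2) = (\<Sum>j<n. if j = i then d!i else 0)"
      by (intro sum.cong) (auto simp: c_def unit_vec_def)
    then show ?thesis using i by simp
  qed
  have s2: "(\<Sum>j<n. (cmod (c$j))^2) = 1"
  proof -
    have "(\<Sum>j<n. (cmod (c$j))^2) = (\<Sum>j<n. if j = i then 1 else 0)"
      by (intro sum.cong) (auto simp: c_def unit_vec_def)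
    then show ?thesis using i by simp
  qed
  have Uc: "U *\<^sub>v c \<in> carrier_vec n" using U c by simp
  have "U *\<^sub>v c \<noteq> 0\<^sub>v n"
  proof
    assume "U *\<^sub>v c = 0\<^sub>v n"
    then have "Re (conjugate (U *\<^sub>v c) \<bullet> (U *\<^sub>v c)) = 0" by simp
    then show False using co(2) s2 by simp
  qed
  then have "Re (qf T (U *\<^sub>v c)) > 0" using posdefD[OF p Tc Uc] by simp
  then have "d!i > 0" using co(1) s1 by simp
  then show ?thesis using lam_d[OF eig sd] by (simp add: i_def)
qed

lemma submat_rows_mult: assumes X: "X \<in> carrier_mat N a" and u: "u \<in> carrier_vec a"
  and r: "r < p" "r + off < N"
  shows "(mat p a (\<lambda>(r,i). X $$ (r + off, i)) *\<^sub>v u) $ r = (X *\<^sub>v u) $ (r + off)"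
  using assms by (simp add: scalar_prod_def row_def)

lemma coord_setup:
  assumes Hc: "H \<in> carrier_mat m m" and U: "U \<in> carrier_mat m m" and uU: "adj U * U = 1\<^sub>m m"
    and x: "x \<in> carrier_vec m"
  shows "U *\<^sub>v (adj U *\<^sub>v x) = x"
proof -
  have "U * adj U = 1\<^sub>m m" using unitary_right[OF U uU] .
  then show ?thesis using U x by (metis assoc_mult_mat_vec adj_carrier one_mult_mat_vec)
qed

lemma H_lower_constr:
  assumes h: "hermitian_mat H" and Hc: "H \<in> carrier_mat m m" and L: "L \<in> carrier_mat m a"
    and k: "1 \<le> k" "k \<le> m"
  shows "\<exists>G \<in> carrier_mat (k-1) a. \<forall>u \<in> carrier_vec a. G *\<^sub>v u = 0\<^sub>v (k-1) \<longrightarrow>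
     lam H k * Re (conjugate (L *\<^sub>v u) \<bullet> (L *\<^sub>v u)) \<le> Re (qf H (L *\<^sub>v u))"
proof -
  obtain U d where U: "U \<in> carrier_mat m m" and uU: "adj U * U = 1\<^sub>m m" and ld: "length d = m"
    and sd: "sorted d" and HU: "H * U = U * diagm d" and eig: "eig_mset H = mset (map complex_of_real d)"
    using spectral[OF h Hc] by blast
  define X where "X = adj U * L"
  have Xc: "X \<in> carrier_mat m a" unfolding X_def using mult_carrier_mat[OF adj_carrier[OF U] L] by simp
  define G where "G = mat (k-1) a (\<lambda>(r,i). X $$ (r + 0, i))"
  have Gc: "G \<in> carrier_mat (k-1) a" by (simp add: G_def)
  have "\<forall>u \<in> carrier_vec a. G *\<^sub>v u = 0\<^sub>v (k-1) \<longrightarrow>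
     lam H k * Re (conjugate (L *\<^sub>v u) \<bullet> (L *\<^sub>v u)) \<le> Re (qf H (L *\<^sub>v u))"
  proof (intro ballI impI)
    fix u :: "complex vec" assume u: "u \<in> carrier_vec a" and G0: "G *\<^sub>v u = 0\<^sub>v (k-1)"
    define x where "x = L *\<^sub>v u"
    have x: "x \<in> carrier_vec m" using L u by (simp add: x_def)
    define c where "c = adj U *\<^sub>v x"
    have c: "c \<in> carrier_vec m" unfolding c_def using mult_mat_vec_carrier[OF adj_carrier[OF U] x] .     
    have xc: "x = U *\<^sub>v c" using coord_setup[OF Hc U uU x] by (simp add: c_def)
    have cX: "c = X *\<^sub>v u" unfolding c_def x_def X_def using assoc_mult_mat_vec[OF adj_carrier[OF U] L u] by simp
    have z: "\<forall>j<m. (cmod (c$j))^2 \<noteq> 0 \<longrightarrow> k - 1 \<le> j"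
    proof (intro allI impI)
      fix j assume j: "j < m" and nz: "(cmod (c$j))^2 \<noteq> 0"
      show "k - 1 \<le> j"
      proof (rule ccontr)
        assume "\<not> k - 1 \<le> j"
        then have jk: "j < k - 1" by simp
        have "(G *\<^sub>v u) $ j = (X *\<^sub>v u) $ (j + 0)" unfolding G_def
          by (rule submat_rows_mult[OF Xc u jk]) (use j in simp)
        then have "c $ j = 0" using G0 jk cX by simp
        then show False using nz by simp
      qed
    qed
    note co = Re_qf_coord[OF Hc U uU ld HU c]
    have "d!(k-1) * (\<Sum>i<m. (cmod (c$i))^2) \<le> (\<Sum>i<m. d!i * (cmod (c$i))^2)"
      by (rule sum_lower[OF sd ld k z]) simp
    then show "lam H k * Re (conjugate (L *\<^sub>v u) \<bullet> (L *\<^sub>v u)) \<le> Re (qf H (L *\<^sub>v u))"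
      using co lam_d[OF eig sd, of k] unfolding x_def[symmetric] xc by simp
  qed
  then show ?thesis using Gc by blast
qed

lemma H_upper_constr:
  assumes h: "hermitian_mat H" and Hc: "H \<in> carrier_mat m m" and L: "L \<in> carrier_mat m a"
    and k: "1 \<le> k" "k \<le> m"
  shows "\<exists>G \<in> carrier_mat (m-k) a. \<forall>u \<in> carrier_vec a. G *\<^sub>v u = 0\<^sub>v (m-k) \<longrightarrow>
     Re (qf H (L *\<^sub>v u)) \<le> lam H k * Re (conjugate (L *\<^sub>v u) \<bullet> (L *\<^sub>v u))"
proof -
  obtain U d where U: "U \<in> carrier_mat m m" and uU: "adj U * U = 1\<^sub>m m" and ld: "length d = m"
    and sd: "sorted d" and HU: "H * U = U * diagm d" and eig: "eig_mset H = mset (map complex_of_real d)"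
    using spectral[OF h Hc] by blast
  define X where "X = adj U * L"
  have Xc: "X \<in> carrier_mat m a" unfolding X_def using mult_carrier_mat[OF adj_carrier[OF U] L] by simp
  define G where "G = mat (m-k) a (\<lambda>(r,i). X $$ (r + k, i))"
  have Gc: "G \<in> carrier_mat (m-k) a" by (simp add: G_def)
  have "\<forall>u \<in> carrier_vec a. G *\<^sub>v u = 0\<^sub>v (m-k) \<longrightarrow>
     Re (qf H (L *\<^sub>v u)) \<le> lam H k * Re (conjugate (L *\<^sub>v u) \<bullet> (L *\<^sub>v u))"
  proof (intro ballI impI)
    fix u :: "complex vec" assume u: "u \<in> carrier_vec a" and G0: "G *\<^sub>v u = 0\<^sub>v (m-k)"
    define x where "x = L *\<^sub>v u"
    have x: "x \<in> carrier_vec m" using L u by (simp add: x_def)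
    define c where "c = adj U *\<^sub>v x"
    have c: "c \<in> carrier_vec m" unfolding c_def using mult_mat_vec_carrier[OF adj_carrier[OF U] x] .     
    have xc: "x = U *\<^sub>v c" using coord_setup[OF Hc U uU x] by (simp add: c_def)
    have cX: "c = X *\<^sub>v u" unfolding c_def x_def X_def using assoc_mult_mat_vec[OF adj_carrier[OF U] L u] by simp
    have z: "\<forall>j<m. (cmod (c$j))^2 \<noteq> 0 \<longrightarrow> j < k"
    proof (intro allI impI)
      fix j assume j: "j < m" and nz: "(cmod (c$j))^2 \<noteq> 0"
      show "j < k"
      proof (rule ccontr)
        assume "\<not> j < k"
        then obtain r where r: "j = r + k" by (metis add.commute le_iff_add not_less)
        have rr: "r < m - k" using r j by simp
        have "(G *\<^sub>v u) $ r = (X *\<^sub>v u) $ (r + k)" unfolding G_def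
          by (rule submat_rows_mult[OF Xc u rr]) (use j r in simp)
        then have "c $ j = 0" using G0 rr cX r by simp
        then show False using nz by simp
      qed
    qed
    note co = Re_qf_coord[OF Hc U uU ld HU c]
    have "(\<Sum>i<m. d!i * (cmod (c$i))^2) \<le> d!(k-1) * (\<Sum>i<m. (cmod (c$i))^2)"
      by (rule sum_upper[OF sd ld k z]) simp
    then show "Re (qf H (L *\<^sub>v u)) \<le> lam H k * Re (conjugate (L *\<^sub>v u) \<bullet> (L *\<^sub>v u))"
      using co lam_d[OF eig sd, of k] unfolding x_def[symmetric] xc by simp
  qed
  then show ?thesis using Gc by blast
qed

lemma interlace_general:
  assumes hH: "hermitian_mat H" and Hc: "H \<in> carrier_mat (a+b) (a+b)"
    and hT: "hermitian_mat T" and Tc: "T \<in> carrier_mat a a"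
    and E: "E \<in> carrier_mat (a+b) a" and L: "L \<in> carrier_mat (a+b) a"
    and hE: "\<forall>u\<in>carrier_vec a. Re (qf T u) \<le> Re (qf H (E *\<^sub>v u)) \<and>
               Re (conjugate (E *\<^sub>v u) \<bullet> (E *\<^sub>v u)) = Re (conjugate u \<bullet> u)"
    and hL: "\<forall>u\<in>carrier_vec a. Re (qf T u) = Re (qf H (L *\<^sub>v u)) \<and>
               Re (conjugate u \<bullet> u) \<le> Re (conjugate (L *\<^sub>v u) \<bullet> (L *\<^sub>v u))"
    and k: "1 \<le> k" "k \<le> a" and lpos: "lam H k \<ge> 0"
  shows "lam H k \<le> lam T k \<and> lam T k \<le> lam H (k + b)"
proof
  obtain G where G: "G \<in> carrier_mat (k-1) a" and hG: "\<forall>u \<in> carrier_vec a. G *\<^sub>v u = 0\<^sub>v (k-1) \<longrightarrow>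
     lam H k * Re (conjugate (L *\<^sub>v u) \<bullet> (L *\<^sub>v u)) \<le> Re (qf H (L *\<^sub>v u))"
    using H_lower_constr[OF hH Hc L, of k] k by auto
  show "lam H k \<le> lam T k"
  proof (rule lam_lower[OF hT Tc k G])
    show "\<forall>u\<in>carrier_vec a. G *\<^sub>v u = 0\<^sub>v (k-1) \<longrightarrow> lam H k * Re (conjugate u \<bullet> u) \<le> Re (qf T u)"
    proof (intro ballI impI)
      fix u :: "complex vec" assume u: "u \<in> carrier_vec a" and "G *\<^sub>v u = 0\<^sub>v (k-1)"
      then have 1: "lam H k * Re (conjugate (L *\<^sub>v u) \<bullet> (L *\<^sub>v u)) \<le> Re (qf H (L *\<^sub>v u))" using hG by blast
      have 2: "lam H k * Re (conjugate u \<bullet> u) \<le> lam H k * Re (conjugate (L *\<^sub>v u) \<bullet> (L *\<^sub>v u))"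
        using hL u lpos by (simp add: mult_left_mono)
      show "lam H k * Re (conjugate u \<bullet> u) \<le> Re (qf T u)" using 1 2 hL u by fastforce
    qed
  qed
next
  have kb: "1 \<le> k + b" "k + b \<le> a + b" using k by auto
  obtain G where G: "G \<in> carrier_mat (a + b - (k + b)) a" and hG: "\<forall>u \<in> carrier_vec a. G *\<^sub>v u = 0\<^sub>v (a + b - (k + b)) \<longrightarrow>
     Re (qf H (E *\<^sub>v u)) \<le> lam H (k + b) * Re (conjugate (E *\<^sub>v u) \<bullet> (E *\<^sub>v u))"
    using H_upper_constr[OF hH Hc E kb] by blast
  have G': "G \<in> carrier_mat (a - k) a" using G by simp
  show "lam T k \<le> lam H (k + b)"
  proof (rule lam_upper[OF hT Tc k G'])
    show "\<forall>u\<in>carrier_vec a. G *\<^sub>v u = 0\<^sub>v (a - k) \<longrightarrow> Re (qf T u) \<le> lam H (k + b) * Re (conjugate u \<bullet> u)"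
    proof (intro ballI impI)
      fix u :: "complex vec" assume u: "u \<in> carrier_vec a" and "G *\<^sub>v u = 0\<^sub>v (a - k)"
      then have 1: "Re (qf H (E *\<^sub>v u)) \<le> lam H (k + b) * Re (conjugate (E *\<^sub>v u) \<bullet> (E *\<^sub>v u))" using hG by simp
      show "Re (qf T u) \<le> lam H (k + b) * Re (conjugate u \<bullet> u)" using 1 hE u by fastforce
    qed
  qed
qed

lemma smult_one_mult_l: "X \<in> carrier_mat n n \<Longrightarrow> (a \<cdot>\<^sub>m 1\<^sub>m n) * X = a \<cdot>\<^sub>m (X :: complex mat)"
  using mult_smult_assoc_mat[OF one_carrier_mat, of X n n a] by simp
lemma smult_one_mult_r: "X \<in> carrier_mat n n \<Longrightarrow> X * (a \<cdot>\<^sub>m 1\<^sub>m n) = a \<cdot>\<^sub>m (X :: complex mat)"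
  using mult_smult_distrib[of X n n "1\<^sub>m n" n a] by simp
lemma one_mult_l: "X \<in> carrier_mat n n \<Longrightarrow> 1\<^sub>m n * X = (X :: complex mat)" by simp
lemma one_mult_r: "X \<in> carrier_mat n n \<Longrightarrow> X * 1\<^sub>m n = (X :: complex mat)" by simp

lemma similarity_blocks:
  fixes Bc Cc Tc Dc :: "complex mat"
  assumes c: "Bc \<in> carrier_mat n n" "Cc \<in> carrier_mat n n" "Tc \<in> carrier_mat n n" "Dc \<in> carrier_mat n n"
  defines "P \<equiv> four_block_mat (1\<^sub>m n) (1\<^sub>m n) ((-\<i>) \<cdot>\<^sub>m 1\<^sub>m n) (\<i> \<cdot>\<^sub>m 1\<^sub>m n)"
    and "Q \<equiv> four_block_mat ((1/2) \<cdot>\<^sub>m 1\<^sub>m n) ((\<i>/2) \<cdot>\<^sub>m 1\<^sub>m n) ((1/2) \<cdot>\<^sub>m 1\<^sub>m n) ((-\<i>/2) \<cdot>\<^sub>m 1\<^sub>m n)"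
  shows "P * Q = 1\<^sub>m (n+n)" "Q * P = 1\<^sub>m (n+n)"
    "Q * four_block_mat Bc Cc Tc Dc * P = four_block_mat
       ((1/2) \<cdot>\<^sub>m (Bc + Dc - \<i> \<cdot>\<^sub>m (Cc - Tc))) ((1/2) \<cdot>\<^sub>m (Bc - Dc + \<i> \<cdot>\<^sub>m (Cc + Tc)))
       ((1/2) \<cdot>\<^sub>m (Bc - Dc - \<i> \<cdot>\<^sub>m (Cc + Tc))) ((1/2) \<cdot>\<^sub>m (Bc + Dc + \<i> \<cdot>\<^sub>m (Cc - Tc)))"
    "Q = (1/2) \<cdot>\<^sub>m adj P"
proof -
  have I: "1\<^sub>m n \<in> carrier_mat n n" "\<And>a. a \<cdot>\<^sub>m (1\<^sub>m n :: complex mat) \<in> carrier_mat n n" by auto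
  show "P * Q = 1\<^sub>m (n+n)" unfolding P_def Q_def
    apply (subst mult_four_block_mat[OF I(1) I(1) I(2) I(2) I(2) I(2) I(2) I(2)])
    by (subst four_block_one[symmetric], intro arg_cong4[where f=four_block_mat]; intro eq_matI; simp add: smult_one_mult_l)
  show "Q * P = 1\<^sub>m (n+n)" unfolding P_def Q_def
    apply (subst mult_four_block_mat[OF I(2) I(2) I(2) I(2) I(1) I(1) I(2) I(2)])
    by (subst four_block_one[symmetric], intro arg_cong4[where f=four_block_mat]; intro eq_matI; simp add: smult_one_mult_l)
  have AP: "four_block_mat Bc Cc Tc Dc * P = four_block_mat (Bc - \<i> \<cdot>\<^sub>m Cc) (Bc + \<i> \<cdot>\<^sub>m Cc) (Tc - \<i> \<cdot>\<^sub>m Dc) (Tc + \<i> \<cdot>\<^sub>m Dc)"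
    unfolding P_def
    apply (subst mult_four_block_mat[OF c I(1) I(1) I(2) I(2)])
    by (intro arg_cong4[where f=four_block_mat]; intro eq_matI; use c in \<open>simp add: smult_one_mult_r\<close>)
  have c2: "Bc - \<i> \<cdot>\<^sub>m Cc \<in> carrier_mat n n" "Bc + \<i> \<cdot>\<^sub>m Cc \<in> carrier_mat n n"
     "Tc - \<i> \<cdot>\<^sub>m Dc \<in> carrier_mat n n" "Tc + \<i> \<cdot>\<^sub>m Dc \<in> carrier_mat n n" using c by auto
  have QA: "Q \<in> carrier_mat (n+n) (n+n)" "four_block_mat Bc Cc Tc Dc \<in> carrier_mat (n+n) (n+n)"
     "P \<in> carrier_mat (n+n) (n+n)" unfolding Q_def P_def using c by auto
  show "Q * four_block_mat Bc Cc Tc Dc * P = four_block_mat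
       ((1/2) \<cdot>\<^sub>m (Bc + Dc - \<i> \<cdot>\<^sub>m (Cc - Tc))) ((1/2) \<cdot>\<^sub>m (Bc - Dc + \<i> \<cdot>\<^sub>m (Cc + Tc)))
       ((1/2) \<cdot>\<^sub>m (Bc - Dc - \<i> \<cdot>\<^sub>m (Cc + Tc))) ((1/2) \<cdot>\<^sub>m (Bc + Dc + \<i> \<cdot>\<^sub>m (Cc - Tc)))"
    unfolding massoc[OF QA] AP unfolding Q_def
    apply (subst mult_four_block_mat[OF I(2) I(2) I(2) I(2) c2])
    by (intro arg_cong4[where f=four_block_mat]; intro eq_matI; use c c2 in \<open>simp add: smult_one_mult_l algebra_simps\<close>)
  show "Q = (1/2) \<cdot>\<^sub>m adj P" unfolding P_def Q_def
    by (intro eq_matI) auto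
qed

lemma sprod_append: assumes "a \<in> carrier_vec n" "c \<in> carrier_vec n" "b \<in> carrier_vec m" "d \<in> carrier_vec m"
  shows "conjugate (a @\<^sub>v b) \<bullet> (c @\<^sub>v d) = conjugate a \<bullet> c + conjugate (b :: complex vec) \<bullet> d"
proof -
  have "conjugate (a @\<^sub>v b) \<bullet> (c @\<^sub>v d) = (\<Sum>i\<in>{0..<n+m}. cnj ((a @\<^sub>v b) $ i) * (c @\<^sub>v d) $ i)"
    using assms by (simp add: scalar_prod_def)
  also have "\<dots> = (\<Sum>i\<in>{0..<n}. cnj ((a @\<^sub>v b) $ i) * (c @\<^sub>v d) $ i) + (\<Sum>i\<in>{n..<n+m}. cnj ((a @\<^sub>v b) $ i) * (c @\<^sub>v d) $ i)"
    by (rule sum.atLeastLessThan_concat[symmetric]) auto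
  also have "(\<Sum>i\<in>{0..<n}. cnj ((a @\<^sub>v b) $ i) * (c @\<^sub>v d) $ i) = conjugate a \<bullet> c"
    using assms by (auto simp: scalar_prod_def intro!: sum.cong)
  also have "(\<Sum>i\<in>{n..<n+m}. cnj ((a @\<^sub>v b) $ i) * (c @\<^sub>v d) $ i) = (\<Sum>i\<in>{0..<m}. cnj ((a @\<^sub>v b) $ (i+n)) * (c @\<^sub>v d) $ (i+n))"
    using sum.shift_bounds_nat_ivl[of "\<lambda>i. cnj ((a @\<^sub>v b) $ i) * (c @\<^sub>v d) $ i" 0 n m] by (simp add: add.commute)
  also have "\<dots> = conjugate b \<bullet> d"
    using assms by (auto simp: scalar_prod_def intro!: sum.cong)
  finally show ?thesis .
qed

lemma Re_nrm_nonneg: "Re (conjugate (y :: complex vec) \<bullet> y) \<ge> 0"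
proof -
  have "Re (conjugate y \<bullet> y) = (\<Sum>i\<in>{0..<dim_vec y}. Re (cnj (y$i) * y$i))"
    unfolding scalar_prod_def Re_sum by (intro sum.cong) auto
  also have "\<dots> = (\<Sum>i\<in>{0..<dim_vec y}. (cmod (y$i))^2)" by (simp only: Re_cnj_sq)
  also have "\<dots> \<ge> 0" by (intro sum_nonneg) auto
  finally show ?thesis by simp
qed

lemma qf_block: assumes c: "M \<in> carrier_mat n n" "N \<in> carrier_mat n n" "N' \<in> carrier_mat n n" "P \<in> carrier_mat n n"
  and u: "u \<in> carrier_vec n" and y: "y \<in> carrier_vec n"
  shows "qf (four_block_mat M N N' P) (u @\<^sub>v y) =
    conjugate u \<bullet> (M *\<^sub>v u) + conjugate u \<bullet> (N *\<^sub>v y) + conjugate y \<bullet> (N' *\<^sub>v u) + conjugate y \<bullet> (P *\<^sub>v y)"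
proof -
  have Hc: "four_block_mat M N N' P \<in> carrier_mat (n+n) (n+n)" using c by simp
  have uy: "u @\<^sub>v y \<in> carrier_vec (n+n)" using u y by simp
  have "qf (four_block_mat M N N' P) (u @\<^sub>v y) = conjugate (u @\<^sub>v y) \<bullet> ((M *\<^sub>v u + N *\<^sub>v y) @\<^sub>v (N' *\<^sub>v u + P *\<^sub>v y))"
    unfolding qf_sprod[OF Hc uy] four_block_mat_mult_vec[OF c u y] ..
  also have "\<dots> = conjugate u \<bullet> (M *\<^sub>v u + N *\<^sub>v y) + conjugate y \<bullet> (N' *\<^sub>v u + P *\<^sub>v y)"
    by (rule sprod_append) (use c u y in auto)
  also have "\<dots> = conjugate u \<bullet> (M *\<^sub>v u) + conjugate u \<bullet> (N *\<^sub>v y) + conjugate y \<bullet> (N' *\<^sub>v u) + conjugate y \<bullet> (P *\<^sub>v y)"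
    using c u y by (simp add: scalar_prod_add_distrib[of _ n])
  finally show ?thesis .
qed

lemma adj_minus: assumes "X \<in> carrier_mat a b" "Y \<in> carrier_mat a b" shows "adj (X - Y) = adj X - adj Y"
  using assms by (intro eq_matI) auto

lemma mat_vec_index_sum: assumes "A \<in> carrier_mat nr nc" "u \<in> carrier_vec nc" "r < nr"
  shows "(A *\<^sub>v u) $ r = (\<Sum>j\<in>{0..<nc}. A $$ (r,j) * u $ j)"
  using assms by (simp add: scalar_prod_def)

lemma mat_vec_uminus: assumes "A \<in> carrier_mat nr nc" "z \<in> carrier_vec nc"
  shows "A *\<^sub>v (- z) = - (A *\<^sub>v (z :: complex vec))"
  using assms by (intro eq_vecI) auto

lemma zero_mat_vec: assumes "A \<in> carrier_mat nr nc" shows "A *\<^sub>v 0\<^sub>v nc = (0\<^sub>v nr :: complex vec)"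
  using assms by (intro eq_vecI) auto

context
  fixes M N N' P Q :: "complex mat" and n :: nat
  assumes cM: "M \<in> carrier_mat n n" and cN: "N \<in> carrier_mat n n" and cN': "N' \<in> carrier_mat n n"
    and cP: "P \<in> carrier_mat n n" and cQ: "Q \<in> carrier_mat n n"
    and aM: "adj M = M" and aP: "adj P = P" and aN: "N' = adj N"
    and PQ: "P * Q = 1\<^sub>m n" and QP: "Q * P = 1\<^sub>m n"
    and pP: "pos_def_cmat P"
begin

lemma sc_herm_H: "hermitian_mat (four_block_mat M N N' P)"
proof (rule hermitian_adjI)
  show "four_block_mat M N N' P \<in> carrier_mat (n+n) (n+n)" using cM cP by simp
  have "adj N' = N" using aN by simp
  then show "adj (four_block_mat M N N' P) = four_block_mat M N N' P"
    using adj_four_block[OF cM cN cN' cP] aM aP aN by simp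
qed

lemma sc_adjQ: "adj Q = Q"
proof -
  have "adj (Q * P) = 1\<^sub>m n" using QP by simp
  then have "P * adj Q = 1\<^sub>m n" using adj_mult[OF cQ cP] aP by simp
  then have "Q * (P * adj Q) = Q" using cQ by simp
  then show ?thesis using QP cQ cP by (simp add: massoc[OF cQ cP adj_carrier[OF cQ], symmetric])
qed

lemma sc_S_carrier: "M - N * Q * N' \<in> carrier_mat n n" using minus_carrier_mat[OF sq_mult_carrier[OF sq_mult_carrier[OF cN cQ] cN']] cM by simp

lemma sc_herm_S: "hermitian_mat (M - N * Q * N')"
proof (rule hermitian_adjI[OF sc_S_carrier])
  have NQ: "N * Q \<in> carrier_mat n n" using cN cQ by simp
  have "adj (N * Q * N') = adj N' * (adj Q * adj N)"
    using adj_mult[OF NQ cN'] adj_mult[OF cN cQ] by simp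
  also have "\<dots> = N * Q * N'" using sc_adjQ aN cN cQ by (simp add: massoc)
  finally have "adj (N * Q * N') = N * Q * N'" .
  then show "adj (M - N * Q * N') = M - N * Q * N'"
    using adj_minus[OF cM, of "N * Q * N'"] aM NQ cN' by simp
qed

lemma sc_herm_M: "hermitian_mat M" using hermitian_adjI[OF cM aM] .

definition "scE = mat (n+n) n (\<lambda>(i,j). if i = j then (1::complex) else 0)"
definition "scL = mat (n+n) n (\<lambda>(i,j). if i < n then (if i = j then (1::complex) else 0) else (- (Q * N')) $$ (i - n, j))"

lemma sc_E: "scE \<in> carrier_mat (n+n) n" "u \<in> carrier_vec n \<Longrightarrow> scE *\<^sub>v u = u @\<^sub>v 0\<^sub>v n"
proof -
  show "scE \<in> carrier_mat (n+n) n" by (simp add: scE_def)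
  assume u: "u \<in> carrier_vec n"
  show "scE *\<^sub>v u = u @\<^sub>v 0\<^sub>v n"
  proof (rule eq_vecI)
    fix i assume "i < dim_vec (u @\<^sub>v 0\<^sub>v n)"
    then have i: "i < n + n" using u by simp
    have "(scE *\<^sub>v u) $ i = (\<Sum>j\<in>{0..<n}. (if i = j then 1 else 0) * u $ j)"
      using i u by (simp add: scE_def scalar_prod_def row_def)
    also have "\<dots> = (if i < n then u $ i else 0)"
      by (simp add: if_distrib[of "\<lambda>x. x * _"] sum.delta cong: if_cong)
    also have "\<dots> = (u @\<^sub>v 0\<^sub>v n) $ i" using i u by auto
    finally show "(scE *\<^sub>v u) $ i = (u @\<^sub>v 0\<^sub>v n) $ i" .
  qed (use u in \<open>simp add: scE_def\<close>)
qed

lemma sc_L: "scL \<in> carrier_mat (n+n) n" "u \<in> carrier_vec n \<Longrightarrow> scL *\<^sub>v u = u @\<^sub>v ((- (Q * N')) *\<^sub>v u)"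
proof -
  show "scL \<in> carrier_mat (n+n) n" by (simp add: scL_def)
  assume u: "u \<in> carrier_vec n"
  have QN: "- (Q * N') \<in> carrier_mat n n" using cQ cN' by simp
  show "scL *\<^sub>v u = u @\<^sub>v ((- (Q * N')) *\<^sub>v u)"
  proof (rule eq_vecI)
    fix i assume "i < dim_vec (u @\<^sub>v ((- (Q * N')) *\<^sub>v u))"
    then have i: "i < n + n" using u QN cQ by simp
    show "(scL *\<^sub>v u) $ i = (u @\<^sub>v ((- (Q * N')) *\<^sub>v u)) $ i"
    proof (cases "i < n")
      case True
      have "(scL *\<^sub>v u) $ i = (\<Sum>j\<in>{0..<n}. (if i = j then 1 else 0) * u $ j)"
        using i u True by (simp add: scL_def scalar_prod_def row_def)
      also have "\<dots> = u $ i" using True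
        by (simp add: if_distrib[of "\<lambda>x. x * _"] sum.delta cong: if_cong)
      finally show ?thesis using True u QN by simp
    next
      case False
      have "(scL *\<^sub>v u) $ i = (\<Sum>j\<in>{0..<n}. (- (Q * N')) $$ (i - n, j) * u $ j)"
        using i u False by (simp add: scL_def scalar_prod_def row_def)
      also have "\<dots> = ((- (Q * N')) *\<^sub>v u) $ (i - n)"
        by (rule mat_vec_index_sum[OF QN u, symmetric]) (use i False in simp)
      finally show ?thesis using False u QN i cQ by simp
    qed
  qed (use u QN cQ in \<open>simp add: scL_def\<close>)
qed

lemma sc_qfM: assumes u: "u \<in> carrier_vec n"
  shows "qf M u = qf (four_block_mat M N N' P) (scE *\<^sub>v u)"
proof -
  have z: "0\<^sub>v n \<in> carrier_vec n" by simp
  have "qf (four_block_mat M N N' P) (scE *\<^sub>v u) = conjugate u \<bullet> (M *\<^sub>v u)"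
    unfolding sc_E(2)[OF u] qf_block[OF cM cN cN' cP u z]
    using u zero_mat_vec[OF cN] zero_mat_vec[OF cP] cN' by simp
  then show ?thesis using qf_sprod[OF cM u] by simp
qed

lemma sc_qfS: assumes u: "u \<in> carrier_vec n"
  shows "qf (M - N * Q * N') u = qf (four_block_mat M N N' P) (scL *\<^sub>v u)"
proof -
  define w where "w = N' *\<^sub>v u"
  define z where "z = Q *\<^sub>v w"
  have wc: "w \<in> carrier_vec n" using cN' u by (simp add: w_def)
  have zc: "z \<in> carrier_vec n" using cQ wc by (simp add: z_def)
  have y: "(- (Q * N')) *\<^sub>v u = - z"
    using cQ cN' u by (simp add: z_def w_def)
  have yc: "- z \<in> carrier_vec n" using zc by simp
  have Pz: "P *\<^sub>v z = w"
    using PQ cP cQ wc by (simp add: z_def assoc_mult_mat_vec[OF cP cQ wc, symmetric])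
  have "qf (four_block_mat M N N' P) (scL *\<^sub>v u) = conjugate u \<bullet> (M *\<^sub>v u) + conjugate u \<bullet> (N *\<^sub>v (- z))
     + (conjugate (- z) \<bullet> (N' *\<^sub>v u) + conjugate (- z) \<bullet> (P *\<^sub>v (- z)))"
    unfolding sc_L(2)[OF u] y qf_block[OF cM cN cN' cP u yc] by (simp only: add.assoc)
  also have "conjugate (- z) \<bullet> (N' *\<^sub>v u) + conjugate (- z) \<bullet> (P *\<^sub>v (- z)) = 0"
    using mat_vec_uminus[OF cP zc] Pz wc zc by (simp add: w_def[symmetric])
  also have "N *\<^sub>v (- z) = - (N *\<^sub>v z)" using mat_vec_uminus[OF cN zc] .
  finally have 1: "qf (four_block_mat M N N' P) (scL *\<^sub>v u) = conjugate u \<bullet> (M *\<^sub>v u) - conjugate u \<bullet> (N *\<^sub>v z)"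
    using u cN zc by simp
  have "(M - N * Q * N') *\<^sub>v u = M *\<^sub>v u - N *\<^sub>v z"
    using minus_mult_distrib_mat_vec[OF cM sq_mult_carrier[OF sq_mult_carrier[OF cN cQ] cN'] u]
      assoc_mult_mat_vec[OF cN sq_mult_carrier[OF cQ cN'] u] assoc_mult_mat_vec[OF cQ cN' u]
      massoc[OF cN cQ cN'] by (simp add: z_def w_def)
  then have "qf (M - N * Q * N') u = conjugate u \<bullet> (M *\<^sub>v u) - conjugate u \<bullet> (N *\<^sub>v z)"
    using qf_sprod[OF sc_S_carrier u] scalar_prod_minus_distrib[of "conjugate u" n] u cM cN zc by simp
  then show ?thesis using 1 by simp
qed

lemma sc_le: assumes u: "u \<in> carrier_vec n"
  shows "Re (qf (M - N * Q * N') u) \<le> Re (qf M u)"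
proof -
  define w where "w = N' *\<^sub>v u"
  define z where "z = Q *\<^sub>v w"
  have wc: "w \<in> carrier_vec n" using cN' u by (simp add: w_def)
  have zc: "z \<in> carrier_vec n" using cQ wc by (simp add: z_def)
  have Pz: "P *\<^sub>v z = w"
    using PQ cP cQ wc by (simp add: z_def assoc_mult_mat_vec[OF cP cQ wc, symmetric])
  have "(M - N * Q * N') *\<^sub>v u = M *\<^sub>v u - N *\<^sub>v z"
    using minus_mult_distrib_mat_vec[OF cM sq_mult_carrier[OF sq_mult_carrier[OF cN cQ] cN'] u]
      assoc_mult_mat_vec[OF cN sq_mult_carrier[OF cQ cN'] u] assoc_mult_mat_vec[OF cQ cN' u]
      massoc[OF cN cQ cN'] by (simp add: z_def w_def)
  then have 1: "qf (M - N * Q * N') u = qf M u - conjugate u \<bullet> (N *\<^sub>v z)"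
    using qf_sprod[OF sc_S_carrier u] qf_sprod[OF cM u] scalar_prod_minus_distrib[of "conjugate u" n] u cM cN zc by simp
  have "conjugate u \<bullet> (N *\<^sub>v z) = conjugate (adj N *\<^sub>v u) \<bullet> z" using sprod_adj[OF cN u zc] .
  also have "adj N *\<^sub>v u = P *\<^sub>v z" using Pz aN by (simp add: w_def)
  also have "conjugate (P *\<^sub>v z) \<bullet> z = conjugate z \<bullet> (P *\<^sub>v z)" using sprod_adj[OF cP zc zc] aP by simp
  also have "\<dots> = qf P z" using qf_sprod[OF cP zc] by simp
  finally have 2: "conjugate u \<bullet> (N *\<^sub>v z) = qf P z" .
  have "Re (qf P z) \<ge> 0"
  proof (cases "z = 0\<^sub>v n")
    case True
    then show ?thesis using qf_sprod[OF cP zc] zero_mat_vec[OF cP] by simp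
  next
    case False
    then show ?thesis using posdefD[OF pP cP zc] by simp
  qed
  then show ?thesis using 1 2 by simp
qed

lemma append_zero_iff: assumes "v \<in> carrier_vec n" "w \<in> carrier_vec m" "v @\<^sub>v w = 0\<^sub>v (n + m)"
  shows "v = (0\<^sub>v n :: complex vec)"
proof (rule eq_vecI)
  fix i assume "i < dim_vec (0\<^sub>v n :: complex vec)"
  then have i: "i < n" by simp
  have a: "(v @\<^sub>v w) $ i = v $ i" using i assms(1,2) by simp
  have b: "(v @\<^sub>v w) $ i = 0" using assms(3) i by simp
  have "v $ i = 0" using a b by simp
  then show "v $ i = 0\<^sub>v n $ i" using i by simp
qed (use assms in simp)

lemma sc_nrmE: assumes u: "u \<in> carrier_vec n"
  shows "Re (conjugate (scE *\<^sub>v u) \<bullet> (scE *\<^sub>v u)) = Re (conjugate u \<bullet> u)"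
  unfolding sc_E(2)[OF u] using sprod_append[OF u u zero_carrier_vec zero_carrier_vec] by simp

lemma sc_nrmL: assumes u: "u \<in> carrier_vec n"
  shows "Re (conjugate u \<bullet> u) \<le> Re (conjugate (scL *\<^sub>v u) \<bullet> (scL *\<^sub>v u))"
proof -
  have y: "(- (Q * N')) *\<^sub>v u \<in> carrier_vec n" using cQ cN' u by simp
  show ?thesis unfolding sc_L(2)[OF u] sprod_append[OF u u y y]
    using Re_nrm_nonneg[of "(- (Q * N')) *\<^sub>v u"] by simp
qed

lemma sc_posdef: assumes pH: "pos_def_cmat (four_block_mat M N N' P)"
  shows "pos_def_cmat M" "pos_def_cmat (M - N * Q * N')"
proof -
  have Hc: "four_block_mat M N N' P \<in> carrier_mat (n+n) (n+n)" using cM cP by simp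
  show "pos_def_cmat M" unfolding pos_def_cmat_def
  proof (intro conjI ballI impI)
    show "hermitian_mat M" using sc_herm_M .
    fix v :: "complex vec" assume v: "v \<in> carrier_vec (dim_row M)" and v0: "v \<noteq> 0\<^sub>v (dim_row M)"
    have vc: "v \<in> carrier_vec n" using v cM by simp
    have "scE *\<^sub>v v \<noteq> 0\<^sub>v (n+n)" using append_zero_iff[OF vc zero_carrier_vec] v0 cM sc_E(2)[OF vc] by auto
    moreover have "scE *\<^sub>v v \<in> carrier_vec (n+n)" using sc_E(1) vc by simp
    ultimately have "Re (qf (four_block_mat M N N' P) (scE *\<^sub>v v)) > 0" using posdefD[OF pH Hc] by simp
    then show "0 < Re (\<Sum>i<dim_row M. \<Sum>j<dim_row M. cnj (v $ i) * M $$ (i, j) * v $ j)"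
      using sc_qfM[OF vc] by (simp add: qf_def)
  qed
  show "pos_def_cmat (M - N * Q * N')" unfolding pos_def_cmat_def
  proof (intro conjI ballI impI)
    show "hermitian_mat (M - N * Q * N')" using sc_herm_S .
    fix v :: "complex vec" assume v: "v \<in> carrier_vec (dim_row (M - N * Q * N'))" and v0: "v \<noteq> 0\<^sub>v (dim_row (M - N * Q * N'))"
    have vc: "v \<in> carrier_vec n" using v cM cN by simp
    have y: "(- (Q * N')) *\<^sub>v v \<in> carrier_vec n" using cQ cN' vc by simp
    have "scL *\<^sub>v v \<noteq> 0\<^sub>v (n+n)" using append_zero_iff[OF vc y] v0 cM cN sc_L(2)[OF vc] by auto
    moreover have "scL *\<^sub>v v \<in> carrier_vec (n+n)" using sc_L(1) vc by simp
    ultimately have "Re (qf (four_block_mat M N N' P) (scL *\<^sub>v v)) > 0" using posdefD[OF pH Hc] by simp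
    then show "0 < Re (\<Sum>i<dim_row (M - N * Q * N'). \<Sum>j<dim_row (M - N * Q * N'). cnj (v $ i) * (M - N * Q * N') $$ (i, j) * v $ j)"
      using sc_qfS[OF vc] by (simp add: qf_def)
  qed
qed

lemma sc_interlace: assumes pH: "pos_def_cmat (four_block_mat M N N' P)" and k: "1 \<le> k" "k \<le> n"
  shows "lam (four_block_mat M N N' P) k \<le> lam M k \<and> lam M k \<le> lam (four_block_mat M N N' P) (k + n)"
    "lam (four_block_mat M N N' P) k \<le> lam (M - N * Q * N') k \<and> lam (M - N * Q * N') k \<le> lam (four_block_mat M N N' P) (k + n)"
proof -
  have Hc: "four_block_mat M N N' P \<in> carrier_mat (n+n) (n+n)" using cM cP by simp
  have lpos: "lam (four_block_mat M N N' P) k \<ge> 0"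
    using posdef_lam_pos[OF pH Hc, of k] k by simp
  have hE: "\<forall>u\<in>carrier_vec n. Re (qf M u) \<le> Re (qf (four_block_mat M N N' P) (scE *\<^sub>v u)) \<and>
               Re (conjugate (scE *\<^sub>v u) \<bullet> (scE *\<^sub>v u)) = Re (conjugate u \<bullet> u)"
    using sc_qfM sc_nrmE by simp
  have hE': "\<forall>u\<in>carrier_vec n. Re (qf M u) = Re (qf (four_block_mat M N N' P) (scE *\<^sub>v u)) \<and>
               Re (conjugate u \<bullet> u) \<le> Re (conjugate (scE *\<^sub>v u) \<bullet> (scE *\<^sub>v u))"
    using sc_qfM sc_nrmE by simp
  show "lam (four_block_mat M N N' P) k \<le> lam M k \<and> lam M k \<le> lam (four_block_mat M N N' P) (k + n)"
    by (rule interlace_general[OF sc_herm_H Hc sc_herm_M cM sc_E(1) sc_E(1) hE hE' k lpos])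
  have hES: "\<forall>u\<in>carrier_vec n. Re (qf (M - N * Q * N') u) \<le> Re (qf (four_block_mat M N N' P) (scE *\<^sub>v u)) \<and>
               Re (conjugate (scE *\<^sub>v u) \<bullet> (scE *\<^sub>v u)) = Re (conjugate u \<bullet> u)"
    using sc_qfM sc_nrmE sc_le by fastforce
  have hLS: "\<forall>u\<in>carrier_vec n. Re (qf (M - N * Q * N') u) = Re (qf (four_block_mat M N N' P) (scL *\<^sub>v u)) \<and>
               Re (conjugate u \<bullet> u) \<le> Re (conjugate (scL *\<^sub>v u) \<bullet> (scL *\<^sub>v u))"
    using sc_qfS sc_nrmL by simp
  show "lam (four_block_mat M N N' P) k \<le> lam (M - N * Q * N') k \<and> lam (M - N * Q * N') k \<le> lam (four_block_mat M N N' P) (k + n)"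
    by (rule interlace_general[OF sc_herm_H Hc sc_herm_S sc_S_carrier sc_E(1) sc_L(1) hES hLS k lpos])
qed

end

lemma Re_term: "Re (cnj zi * complex_of_real a * zj) = a * (Re zi * Re zj + Im zi * Im zj)"
  by (simp add: algebra_simps)

lemma real_posdef_qf: assumes pA: "pos_def_rmat A" and Ac: "A \<in> carrier_mat m m"
  and z: "z \<in> carrier_vec m" "z \<noteq> 0\<^sub>v m"
  shows "Re (qf (cmat A) z) > 0"
proof -
  define x where "x = vec m (\<lambda>i. Re (z$i))"
  define y where "y = vec m (\<lambda>i. Im (z$i))"
  have xc: "x \<in> carrier_vec m" and yc: "y \<in> carrier_vec m" by (auto simp: x_def y_def)
  have form: "w \<bullet> (A *\<^sub>v w) = (\<Sum>i<m. \<Sum>j<m. A $$ (i,j) * (w$i * w$j))" if w: "w \<in> carrier_vec m" for w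
    using w Ac by (auto simp: scalar_prod_def sum_distrib_left atLeast0LessThan algebra_simps intro!: sum.cong)
  have "Re (qf (cmat A) z) = (\<Sum>i<m. \<Sum>j<m. Re (cnj (z$i) * complex_of_real (A $$ (i,j)) * z$j))"
    unfolding qf_def Re_sum using Ac by (intro sum.cong refl) (auto simp: cmat_def)
  also have "\<dots> = (\<Sum>i<m. \<Sum>j<m. A $$ (i,j) * (Re (z$i) * Re (z$j) + Im (z$i) * Im (z$j)))"
    by (simp only: Re_term)
  also have "\<dots> = x \<bullet> (A *\<^sub>v x) + y \<bullet> (A *\<^sub>v y)"
    unfolding form[OF xc] form[OF yc] by (simp add: x_def y_def algebra_simps sum.distrib)
  finally have key: "Re (qf (cmat A) z) = x \<bullet> (A *\<^sub>v x) + y \<bullet> (A *\<^sub>v y)" .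
  have pd: "\<And>w. w \<in> carrier_vec m \<Longrightarrow> w \<noteq> 0\<^sub>v m \<Longrightarrow> w \<bullet> (A *\<^sub>v w) > 0"
    using pA Ac unfolding pos_def_rmat_def by auto
  have nn: "w \<bullet> (A *\<^sub>v w) \<ge> 0" if w: "w \<in> carrier_vec m" for w
  proof (cases "w = 0\<^sub>v m")
    case True then show ?thesis using Ac by simp
  next
    case False then show ?thesis using pd[OF w] by fastforce
  qed
  have "x \<noteq> 0\<^sub>v m \<or> y \<noteq> 0\<^sub>v m"
  proof (rule ccontr)
    assume "\<not> (x \<noteq> 0\<^sub>v m \<or> y \<noteq> 0\<^sub>v m)"
    then have "x = 0\<^sub>v m" "y = 0\<^sub>v m" by auto
    then have "z = 0\<^sub>v m"
    proof (intro eq_vecI)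
      fix i assume "x = 0\<^sub>v m" "y = 0\<^sub>v m" "i < dim_vec (0\<^sub>v m :: complex vec)"
      then have i: "i < m" by simp
      have a: "x $ i = Re (z$i)" "y $ i = Im (z$i)" using i by (simp_all add: x_def y_def)
      have b: "x $ i = 0" "y $ i = 0" using \<open>x = 0\<^sub>v m\<close> \<open>y = 0\<^sub>v m\<close> i by simp_all
      from a b have "Re (z$i) = 0" "Im (z$i) = 0" by simp_all
      then show "z $ i = 0\<^sub>v m $ i" using \<open>i < dim_vec (0\<^sub>v m :: complex vec)\<close> by (simp add: complex_eq_iff)
    qed (use z in simp)
    then show False using z by simp
  qed
  then show ?thesis using key pd[OF xc] pd[OF yc] nn[OF xc] nn[OF yc] by fastforce
qed

lemma cmat_carrier[simp]: "X \<in> carrier_mat a b \<Longrightarrow> cmat X \<in> carrier_mat a b"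
  by (simp add: cmat_def)
lemma cmat_dims[simp]: "dim_row (cmat X) = dim_row X" "dim_col (cmat X) = dim_col X"
  by (simp_all add: cmat_def)
lemma cmat_index[simp]: "i < dim_row X \<Longrightarrow> j < dim_col X \<Longrightarrow> cmat X $$ (i,j) = complex_of_real (X $$ (i,j))"
  by (simp add: cmat_def)
lemma cconj_carrier[simp]: "X \<in> carrier_mat a b \<Longrightarrow> cconj_mat X \<in> carrier_mat a b"
  by (simp add: cconj_mat_def)
lemma cconj_dims[simp]: "dim_row (cconj_mat X) = dim_row X" "dim_col (cconj_mat X) = dim_col X"
  by (simp_all add: cconj_mat_def)
lemma cconj_index[simp]: "i < dim_row X \<Longrightarrow> j < dim_col X \<Longrightarrow> cconj_mat X $$ (i,j) = cnj (X $$ (i,j))"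
  by (simp add: cconj_mat_def)

lemma append_zero_iff2: assumes "v \<in> carrier_vec n" "w \<in> carrier_vec m" "v @\<^sub>v w = 0\<^sub>v (n + m)"
  shows "w = (0\<^sub>v m :: complex vec)"
proof (rule eq_vecI)
  fix i assume "i < dim_vec (0\<^sub>v m :: complex vec)"
  then have i: "i < m" by simp
  have a: "(v @\<^sub>v w) $ (n + i) = w $ i" using i assms(1,2) by simp
  have b: "(v @\<^sub>v w) $ (n + i) = 0" using assms(3) i by simp
  have "w $ i = 0" using a b by simp
  then show "w $ i = 0\<^sub>v m $ i" using i by simp
qed (use assms in simp)

lemma adj_smult: "adj (c \<cdot>\<^sub>m X) = cnj c \<cdot>\<^sub>m adj X"
  by (intro eq_matI) auto

lemma lam_eq: "eig_mset X = eig_mset Y \<Longrightarrow> lam X k = lam Y k"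
  by (simp add: lam_def eig_list_def)

lemma eig_list_empty: "X \<in> carrier_mat 0 0 \<Longrightarrow> eig_list X = []"
proof -
  assume X: "X \<in> carrier_mat 0 0"
  have "degree (char_poly X) = 0 \<and> coeff (char_poly X) 0 = 1" using degree_monic_char_poly[OF X] .
  then have "char_poly X = 1" by (metis degree_0_id one_pCons)
  then show ?thesis by (simp add: eig_list_def eig_mset_def)
qed

theorem mainTheorem5:
  fixes n :: nat and B C D :: "real mat"
  defines "A \<equiv> four_block_mat B C (transpose_mat C) D"
    and "M \<equiv> (1/2 :: complex) \<cdot>\<^sub>m (cmat B + cmat D - \<i> \<cdot>\<^sub>m (cmat C - cmat (transpose_mat C)))"
    and "N \<equiv> (1/2 :: complex) \<cdot>\<^sub>m (cmat B - cmat D + \<i> \<cdot>\<^sub>m (cmat C + cmat (transpose_mat C)))"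
  defines "S \<equiv> M - N * the (mat_inverse (cconj_mat M)) * cconj_mat N"
  assumes "B \<in> carrier_mat n n" and "C \<in> carrier_mat n n" and "D \<in> carrier_mat n n"
    and "pos_def_rmat A"
  shows "hermitian_mat (four_block_mat M N (cconj_mat N) (cconj_mat M))
    \<and> eig_mset (four_block_mat M N (cconj_mat N) (cconj_mat M)) = eig_mset (cmat A)
    \<and> pos_def_cmat M
    \<and> pos_def_cmat S
    \<and> (\<forall>k\<in>{1..n}. lam (cmat A) k \<le> lam M k \<and> lam M k \<le> lam (cmat A) (k + n))
    \<and> (\<forall>k\<in>{1..n}. lam (cmat A) k \<le> lam S k \<and> lam S k \<le> lam (cmat A) (k + n))
    \<and> cond_num M \<le> cond_num (cmat A)
    \<and> cond_num S \<le> cond_num (cmat A)"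
proof -
  have cB: "B \<in> carrier_mat n n" and cC: "C \<in> carrier_mat n n" and cD: "D \<in> carrier_mat n n"
    using assms by auto
  have pA: "pos_def_rmat A" using assms by simp
  have cCt: "transpose_mat C \<in> carrier_mat n n" using cC by simp
  have Ac: "A \<in> carrier_mat (n+n) (n+n)" unfolding A_def using cB cD by simp
  have tA: "transpose_mat A = A" using pA unfolding pos_def_rmat_def by simp
  have symA: "A $$ (i,j) = A $$ (j,i)" if "i < n+n" "j < n+n" for i j
  proof -
    have "transpose_mat A $$ (i,j) = A $$ (j,i)" using that Ac by simp
    then show ?thesis using tA by simp
  qed
  have symB: "B $$ (i,j) = B $$ (j,i)" if "i < n" "j < n" for i j
    using symA[of i j] that cB cC cD by (simp add: A_def)
  have symD: "D $$ (i,j) = D $$ (j,i)" if "i < n" "j < n" for i j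
    using symA[of "i+n" "j+n"] that cB cC cD by (simp add: A_def)
  have cc: "cmat B \<in> carrier_mat n n" "cmat C \<in> carrier_mat n n" "cmat D \<in> carrier_mat n n"
    "cmat (transpose_mat C) \<in> carrier_mat n n" using cB cC cD cCt by simp_all
  have Mc: "M \<in> carrier_mat n n" unfolding M_def
    by (intro smult_carrier_mat minus_carrier_mat cc)
  have Nc: "N \<in> carrier_mat n n" unfolding N_def
    by (intro smult_carrier_mat add_carrier_mat minus_carrier_mat cc)
  have Mij: "M $$ (i,j) = (1/2) * (complex_of_real (B$$(i,j)) + complex_of_real (D$$(i,j))
     - \<i> * (complex_of_real (C$$(i,j)) - complex_of_real (C$$(j,i))))" if "i < n" "j < n" for i j
    using that cB cC cD by (simp add: M_def)
  have Nij: "N $$ (i,j) = (1/2) * (complex_of_real (B$$(i,j)) - complex_of_real (D$$(i,j))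
     + \<i> * (complex_of_real (C$$(i,j)) + complex_of_real (C$$(j,i))))" if "i < n" "j < n" for i j
    using that cB cC cD by (simp add: N_def)
  have aM: "adj M = M"
  proof (rule eq_matI)
    fix i j assume "i < dim_row M" "j < dim_col M"
    then have i: "i < n" and j: "j < n" using Mc by auto
    show "adj M $$ (i,j) = M $$ (i,j)"
      using Mij[OF i j] Mij[OF j i] symB[OF i j] symD[OF i j] i j Mc
      by (simp add: complex_eq_iff)
  qed (use Mc in auto)
  have Mji: "M $$ (i,j) = cnj (M $$ (j,i))" if "i < n" "j < n" for i j
  proof -
    have "adj M $$ (i,j) = cnj (M $$ (j,i))" using that Mc by simp
    then show ?thesis using aM by simp
  qed
  define P where "P = cconj_mat M"
  define N' where "N' = cconj_mat N"
  have Pc: "P \<in> carrier_mat n n" using Mc by (simp add: P_def)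
  have N'c: "N' \<in> carrier_mat n n" using Nc by (simp add: N'_def)
  have aN: "N' = adj N"
  proof (rule eq_matI)
    fix i j assume "i < dim_row (adj N)" "j < dim_col (adj N)"
    then have i: "i < n" and j: "j < n" using Nc by auto
    show "N' $$ (i,j) = adj N $$ (i,j)"
      using Nij[OF i j] Nij[OF j i] symB[OF i j] symD[OF i j] i j Nc
      by (simp add: N'_def complex_eq_iff)
  qed (use Nc in \<open>auto simp: N'_def\<close>)
  have aP: "adj P = P"
  proof (rule eq_matI)
    fix i j assume "i < dim_row P" "j < dim_col P"
    then have i: "i < n" and j: "j < n" using Pc by auto
    show "adj P $$ (i,j) = P $$ (i,j)"
      using Mji[OF i j] i j Mc by (simp add: P_def)
  qed (use Pc in auto)
  have aN': "adj N' = N" using aN by simp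
  define H where "H = four_block_mat M N N' P"
  have Hc: "H \<in> carrier_mat (n+n) (n+n)" using Mc Pc by (simp add: H_def)
  have hH: "hermitian_mat H"
    by (rule hermitian_adjI[OF Hc]) (use adj_four_block[OF Mc Nc N'c Pc] aM aP aN aN' in \<open>simp add: H_def\<close>)
  have cAb: "cmat A = four_block_mat (cmat B) (cmat C) (cmat (transpose_mat C)) (cmat D)"
    by (rule eq_matI) (use cB cC cD in \<open>auto simp: A_def\<close>)
  define Ps where "Ps = four_block_mat (1\<^sub>m n) (1\<^sub>m n) ((-\<i>) \<cdot>\<^sub>m 1\<^sub>m n) (\<i> \<cdot>\<^sub>m (1\<^sub>m n :: complex mat))"
  define Qs where "Qs = four_block_mat ((1/2) \<cdot>\<^sub>m 1\<^sub>m n) ((\<i>/2) \<cdot>\<^sub>m 1\<^sub>m n) ((1/2) \<cdot>\<^sub>m 1\<^sub>m n) ((-\<i>/2) \<cdot>\<^sub>m (1\<^sub>m n :: complex mat))"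
  note sb = similarity_blocks[OF cc(1) cc(2) cc(4) cc(3), folded Ps_def Qs_def]
  have Psc: "Ps \<in> carrier_mat (n+n) (n+n)" and Qsc: "Qs \<in> carrier_mat (n+n) (n+n)" by (auto simp: Ps_def Qs_def)
  have blk3: "(1/2) \<cdot>\<^sub>m (cmat B - cmat D - \<i> \<cdot>\<^sub>m (cmat C + cmat (transpose_mat C))) = N'"
  proof (rule eq_matI)
    fix i j assume "i < dim_row N'" "j < dim_col N'"
    then have i: "i < n" and j: "j < n" using N'c by auto
    show "((1/2) \<cdot>\<^sub>m (cmat B - cmat D - \<i> \<cdot>\<^sub>m (cmat C + cmat (transpose_mat C)))) $$ (i,j) = N' $$ (i,j)"
      using Nij[OF i j] i j cB cC cD Nc by (simp add: N'_def complex_eq_iff)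
  qed (use cB cC N'c in auto)
  have blk4: "(1/2) \<cdot>\<^sub>m (cmat B + cmat D + \<i> \<cdot>\<^sub>m (cmat C - cmat (transpose_mat C))) = P"
  proof (rule eq_matI)
    fix i j assume "i < dim_row P" "j < dim_col P"
    then have i: "i < n" and j: "j < n" using Pc by auto
    show "((1/2) \<cdot>\<^sub>m (cmat B + cmat D + \<i> \<cdot>\<^sub>m (cmat C - cmat (transpose_mat C)))) $$ (i,j) = P $$ (i,j)"
      using Mij[OF i j] i j cB cC cD Mc by (simp add: P_def complex_eq_iff)
  qed (use cB cC Pc in auto)
  have HQP: "H = Qs * cmat A * Ps"
    unfolding cAb sb(3) blk3 blk4 H_def M_def N_def ..
  have eigeq: "eig_mset H = eig_mset (cmat A)"
  proof -
    have "similar_mat H (cmat A)"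
      using Hc Ac Psc Qsc sb(1) sb(2) HQP
      by (intro similar_matI[where P=Qs and Q=Ps and n="n+n"]) auto
    then show ?thesis by (simp add: eig_mset_def char_poly_similar)
  qed
  have cAc: "cmat A \<in> carrier_mat (n+n) (n+n)" using Ac by simp
  have adjQs: "adj Qs = (1/2) \<cdot>\<^sub>m Ps" using sb(4) by (simp add: adj_smult)
  have qfH: "qf H w = (1/2) * qf (cmat A) (Ps *\<^sub>v w)" if w: "w \<in> carrier_vec (n+n)" for w
  proof -
    have Pw: "Ps *\<^sub>v w \<in> carrier_vec (n+n)" using Psc w by simp
    have APw: "cmat A *\<^sub>v (Ps *\<^sub>v w) \<in> carrier_vec (n+n)" using cAc Pw by simp
    have "qf H w = conjugate w \<bullet> (H *\<^sub>v w)" using qf_sprod[OF Hc w] .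
    also have "H *\<^sub>v w = Qs *\<^sub>v (cmat A *\<^sub>v (Ps *\<^sub>v w))"
      unfolding HQP using assoc_mult_mat_vec[OF sq_mult_carrier[OF Qsc cAc] Psc w] assoc_mult_mat_vec[OF Qsc cAc Pw] by simp
    also have "conjugate w \<bullet> (Qs *\<^sub>v (cmat A *\<^sub>v (Ps *\<^sub>v w))) = conjugate (adj Qs *\<^sub>v w) \<bullet> (cmat A *\<^sub>v (Ps *\<^sub>v w))"
      using sprod_adj[OF Qsc w APw] .
    also have "adj Qs *\<^sub>v w = (1/2) \<cdot>\<^sub>v (Ps *\<^sub>v w)" unfolding adjQs using Psc w by (intro eq_vecI) auto
    also have "conjugate ((1/2) \<cdot>\<^sub>v (Ps *\<^sub>v w)) \<bullet> (cmat A *\<^sub>v (Ps *\<^sub>v w)) = (1/2) * (conjugate (Ps *\<^sub>v w) \<bullet> (cmat A *\<^sub>v (Ps *\<^sub>v w)))"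
      using Pw APw smult_scalar_prod_distrib[OF carrier_vec_conjugate[OF Pw] APw, of "1/2"] by (simp add: conjugate_smult_vec)
    also have "conjugate (Ps *\<^sub>v w) \<bullet> (cmat A *\<^sub>v (Ps *\<^sub>v w)) = qf (cmat A) (Ps *\<^sub>v w)"
      using qf_sprod[OF cAc Pw] by simp
    finally show ?thesis .
  qed
  have pH: "pos_def_cmat H" unfolding pos_def_cmat_def
  proof (intro conjI ballI impI)
    show "hermitian_mat H" using hH .
    fix w :: "complex vec" assume w: "w \<in> carrier_vec (dim_row H)" and w0: "w \<noteq> 0\<^sub>v (dim_row H)"
    have wc: "w \<in> carrier_vec (n+n)" using w Hc by simp
    have Pw: "Ps *\<^sub>v w \<in> carrier_vec (n+n)" using Psc wc by simp
    have "Ps *\<^sub>v w \<noteq> 0\<^sub>v (n+n)"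
    proof
      assume "Ps *\<^sub>v w = 0\<^sub>v (n+n)"
      then have "Qs *\<^sub>v (Ps *\<^sub>v w) = 0\<^sub>v (n+n)" using Qsc by (simp add: zero_mat_vec)
      moreover have "Qs *\<^sub>v (Ps *\<^sub>v w) = w" using sb(2) Qsc Psc wc
        by (simp add: assoc_mult_mat_vec[OF Qsc Psc wc, symmetric])
      ultimately show False using w0 Hc by simp
    qed
    then have "Re (qf (cmat A) (Ps *\<^sub>v w)) > 0" using real_posdef_qf[OF pA Ac Pw] by simp
    then have "Re (qf H w) > 0" unfolding qfH[OF wc] by simp
    then show "0 < Re (\<Sum>i<dim_row H. \<Sum>j<dim_row H. cnj (w $ i) * H $$ (i, j) * w $ j)"
      by (simp add: qf_def)
  qed
  have pP: "pos_def_cmat P" unfolding pos_def_cmat_def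
  proof (intro conjI ballI impI)
    show "hermitian_mat P" using hermitian_adjI[OF Pc aP] .
    fix y :: "complex vec" assume y: "y \<in> carrier_vec (dim_row P)" and y0: "y \<noteq> 0\<^sub>v (dim_row P)"
    have yc: "y \<in> carrier_vec n" using y Pc by simp
    have z: "0\<^sub>v n \<in> carrier_vec n" by simp
    have "0\<^sub>v n @\<^sub>v y \<noteq> 0\<^sub>v (n+n)" using append_zero_iff2[OF z yc] y0 Pc by auto
    moreover have "0\<^sub>v n @\<^sub>v y \<in> carrier_vec (n+n)" using yc by simp
    ultimately have "Re (qf H (0\<^sub>v n @\<^sub>v y)) > 0" using posdefD[OF pH Hc] by simp
    moreover have "qf H (0\<^sub>v n @\<^sub>v y) = qf P y"
      unfolding H_def qf_block[OF Mc Nc N'c Pc z yc] qf_sprod[OF Pc yc]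
      using zero_mat_vec[OF N'c] zero_mat_vec[OF Mc] yc Nc Pc by simp
    ultimately have "Re (qf P y) > 0" by simp
    then show "0 < Re (\<Sum>i<dim_row P. \<Sum>j<dim_row P. cnj (y $ i) * P $$ (i, j) * y $ j)"
      unfolding qf_def .
  qed
  have detP: "det P \<noteq> 0"
  proof
    assume "det P = 0"
    then obtain v where v: "v \<in> carrier_vec n" "v \<noteq> 0\<^sub>v n" "P *\<^sub>v v = 0\<^sub>v n"
      using det_0_iff_vec_prod_zero_field[OF Pc] by blast
    have "qf P v = 0" using qf_sprod[OF Pc v(1)] v by simp
    then show False using posdefD[OF pP Pc v(1) v(2)] by simp
  qed
  have "mat_inverse P \<noteq> None"
    using mat_inverse(1)[OF Pc, of undefined] det_non_zero_imp_unit[OF Pc detP, of undefined] by auto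
  then obtain Q where mQ: "mat_inverse P = Some Q" by auto
  from mat_inverse(2)[OF Pc mQ] have PQ: "P * Q = 1\<^sub>m n" and QP: "Q * P = 1\<^sub>m n" and Qc: "Q \<in> carrier_mat n n"
    by auto
  have SQ: "S = M - N * Q * N'" unfolding S_def P_def[symmetric] N'_def[symmetric] mQ by simp
  note ctx = Mc Nc N'c Pc Qc aM aP aN PQ QP pP
  have pM: "pos_def_cmat M" using sc_posdef(1)[OF ctx pH[unfolded H_def]] .
  have pS: "pos_def_cmat S" using sc_posdef(2)[OF ctx pH[unfolded H_def]] unfolding SQ .
  have lamA: "lam (cmat A) k = lam H k" for k using lam_eq[OF eigeq] by simp
  have intM: "lam (cmat A) k \<le> lam M k \<and> lam M k \<le> lam (cmat A) (k + n)" if "k \<in> {1..n}" for k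
    using sc_interlace(1)[OF ctx pH[unfolded H_def], of k] that unfolding lamA H_def by auto
  have intS: "lam (cmat A) k \<le> lam S k \<and> lam S k \<le> lam (cmat A) (k + n)" if "k \<in> {1..n}" for k
    using sc_interlace(2)[OF ctx pH[unfolded H_def], of k] that unfolding lamA H_def SQ by auto
  have Sc: "S \<in> carrier_mat n n" unfolding SQ using minus_carrier_mat[OF sq_mult_carrier[OF sq_mult_carrier[OF Nc Qc] N'c]] Mc by simp
  have cond: "cond_num T \<le> cond_num (cmat A)" if Tc: "T \<in> carrier_mat n n"
    and iT: "\<forall>k\<in>{1..n}. lam (cmat A) k \<le> lam T k \<and> lam T k \<le> lam (cmat A) (k + n)" for T
  proof (cases "n = 0")
    case True
    have "eig_list T = []" using eig_list_empty Tc True by simp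
    moreover have "eig_list (cmat A) = []" using eig_list_empty cAc True by simp
    ultimately show ?thesis using Tc cAc Ac True by (simp add: cond_num_def lam_def)
  next
    case False
    then have n1: "1 \<in> {1..n}" "n \<in> {1..n}" by auto
    have l1: "lam (cmat A) 1 > 0" using posdef_lam_pos[OF pH Hc, of 1] False lamA by simp
    have "lam (cmat A) n > 0" using posdef_lam_pos[OF pH Hc, of n] False lamA by simp
    then have "lam T n > 0" using iT n1 by fastforce
    then have "lam T n / lam T 1 \<le> lam (cmat A) (n + n) / lam (cmat A) 1"
      using iT n1 l1 by (intro frac_le) fastforce+
    then show ?thesis using Tc cAc Ac by (simp add: cond_num_def)
  qed
  show ?thesis unfolding H_def[symmetric] N'_def[symmetric] P_def[symmetric]
    using hH eigeq pM pS intM intS cond[OF Mc] cond[OF Sc] intM intS by blast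
qed

end
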